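(* Let $D\subset S$ and $A\in\Sigma^D$. Then $\mathcal H_A=\mathcal H^{(D)}_{A(D)}\cap\mathcal H_\pi$.
   Context: Let $\mathcal H$ be a complex Hilbert space. A projection is a bounded self-adjoint idempotent operator; $\wedge_\alpha p_\alpha$ is the projection onto the intersection of ranges. For $\phi\neq0$, $\hat\phi=\phi/\|\phi\|$. Let $S$ be a set; for each $t\in S$ let $\Gamma(t)$ be a countable set and for $a\in\Gamma(t)$ let $p^t_a$ be a projection on $\mathcal H$ with $\sum_{a\in\Gamma(t)}p^t_a=I$ (strong convergence); $p^{t_1,\dots,t_k}_{a_1,\dots,a_k}=\wedge_{i=1}^kp^{t_i}_{a_i}$. For $T\subset S$, let $\pi(T)=\{p^t_a:t\in T,a\in\Gamma(t)\}$ and $\pi=\pi(S)$. A family $\rho$ commutes on $\phi$ if $W\phi=V\phi$ whenever $W,V$ are finite products of elements of $\rho$ with the same factors (with multiplicity) in possibly different orders; $\mathcal H_\rho$ is the set of such $\phi$. Let $\Omega=\prod_{t\in S}\Gamma(t)$, $\Omega(D)=\prod_{t\in D}\Gamma(t)$, $X_t(\omega)=\omega_t$; $\Sigma$ (resp. $\Sigma(D)$) is the σ-algebra on $\Omega$ (resp. $\Omega(D)$) generated by the sets $\{X_t=a\}$, $t\in S$ (resp. $t\in D$); $\Sigma^D$ is the σ-algebra on $\Omega$ generated by $\{X_t:t\in D\}$. For $\phi\in\mathcal H_\pi\setminus\{0\}$, $\mathbb P_\phi$ is the unique probability measure on $(\Omega,\Sigma)$ with $\mathbb P_\phi(X_{t_i}=a_i,\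 i\le k)=\|p^{t_1,\dots,t_k}_{a_1,\dots,a_k}\hat\phi\|^2$ for all $t_i\in S$, $a_i$; for $\phi\in\mathcal H_{\pi(D)}\setminus\{0\}$, $\mathbb P^{(D)}_\phi$ is the analogous measure on $(\Omega(D),\Sigma(D))$ for $t_i\in D$. For $A\in\Sigma$, $\mathcal H_A=\{\phi\in\mathcal H_\pi:\phi=0\text{ or }\mathbb P_\phi(A)=1\}$; for $B\in\Sigma(D)$, $\mathcal H^{(D)}_B=\{\phi\in\mathcal H_{\pi(D)}:\phi=0\text{ or }\mathbb P^{(D)}_\phi(B)=1\}$. Every $A\in\Sigma^D$ is $D$-determined (two elements of $\Omega$ with the same restriction to $D$ are both in $A$ or both not), and $A(D)=\{\omega\in\Omega(D):\omega_t=\omega'_t\text{ for all }t\in D\text{ for some }\omega'\in A\}$, which lies in $\Sigma(D)$. *)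

theory Defs
  imports "HOL-Probability.Probability"
begin

text \<open>The distribution has no complex vector space class, so we introduce one:
 a real normed vector space with a compatible complex scalar multiplication and
 a complex inner product (linear in the second, conjugate-linear in the first
 argument) inducing the norm.\<close>

class complex_inner = real_normed_vector +
  fixes scaleC :: "complex \<Rightarrow> 'a \<Rightarrow> 'a"
    and cinner :: "'a \<Rightarrow> 'a \<Rightarrow> complex"
  assumes scaleC_add_right: "scaleC c (x + y) = scaleC c x + scaleC c y"
    and scaleC_add_left: "scaleC (c + d) x = scaleC c x + scaleC d x"
    and scaleC_scaleC: "scaleC c (scaleC d x) = scaleC (c * d) x"
    and scaleC_one: "scaleC 1 x = x"
    and scaleR_scaleC: "scaleR r x = scaleC (complex_of_real r) x"
    and cinner_add_left: "cinner (x + y) z = cinner x z + cinner y z"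
    and cinner_scaleC_left: "cinner (scaleC c x) y = cnj c * cinner x y"
    and cinner_commute: "cinner x y = cnj (cinner y x)"
    and cinner_self_nonneg: "Im (cinner x x) = 0 \<and> Re (cinner x x) \<ge> 0"
    and cinner_self_eq_zero: "cinner x x = 0 \<longleftrightarrow> x = 0"
    and norm_eq_sqrt_cinner: "norm x = sqrt (Re (cinner x x))"

class chilbert_space = complex_inner + complete_space

definition bounded_clinear_op :: "('h::complex_inner \<Rightarrow> 'h) \<Rightarrow> bool" where
  "bounded_clinear_op f \<longleftrightarrow>
     (\<forall>x y. f (x + y) = f x + f y) \<and> (\<forall>c x. f (scaleC c x) = scaleC c (f x)) \<and>
     (\<exists>K. \<forall>x. norm (f x) \<le> norm x * K)"

definition is_projection :: "('h::complex_inner \<Rightarrow> 'h) \<Rightarrow> bool" where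
  "is_projection f \<longleftrightarrow> bounded_clinear_op f \<and>
     (\<forall>x y. cinner (f x) y = cinner x (f y)) \<and> f \<circ> f = f"

definition proj_meet :: "('h::complex_inner \<Rightarrow> 'h) list \<Rightarrow> ('h \<Rightarrow> 'h)" where
  "proj_meet ps = (THE q. is_projection q \<and> range q = (\<Inter>f\<in>set ps. range f))"

definition pjoint :: "('s \<Rightarrow> 'a \<Rightarrow> ('h::complex_inner \<Rightarrow> 'h)) \<Rightarrow> 's list \<Rightarrow> 'a list \<Rightarrow> ('h \<Rightarrow> 'h)" where
  "pjoint p ts as = proj_meet (map (\<lambda>(t, a). p t a) (zip ts as))"

definition op_prod :: "('h \<Rightarrow> 'h) list \<Rightarrow> ('h \<Rightarrow> 'h)" where
  "op_prod xs = foldr (\<circ>) xs id"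

definition commutes_on :: "('h \<Rightarrow> 'h) set \<Rightarrow> 'h \<Rightarrow> bool" where
  "commutes_on \<rho> \<phi> \<longleftrightarrow> (\<forall>xs ys. set xs \<subseteq> \<rho> \<and> set ys \<subseteq> \<rho> \<and> mset xs = mset ys
      \<longrightarrow> op_prod xs \<phi> = op_prod ys \<phi>)"

definition Hcomm :: "('h \<Rightarrow> 'h) set \<Rightarrow> 'h set" where
  "Hcomm \<rho> = {\<phi>. commutes_on \<rho> \<phi>}"

definition pfam :: "('s \<Rightarrow> 'a \<Rightarrow> ('h \<Rightarrow> 'h)) \<Rightarrow> ('s \<Rightarrow> 'a set) \<Rightarrow> 's set \<Rightarrow> ('h \<Rightarrow> 'h) set" where
  "pfam p \<Gamma> T = {p t a | t a. t \<in> T \<and> a \<in> \<Gamma> t}"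

definition Omega :: "('s \<Rightarrow> 'a set) \<Rightarrow> 's set \<Rightarrow> ('s \<Rightarrow> 'a) set" where
  "Omega \<Gamma> D = PiE D \<Gamma>"

definition Sigma_D :: "('s \<Rightarrow> 'a set) \<Rightarrow> 's set \<Rightarrow> ('s \<Rightarrow> 'a) set set" where
  "Sigma_D \<Gamma> D = sigma_sets (Omega \<Gamma> D)
     {{\<omega> \<in> Omega \<Gamma> D. \<omega> t = a} | t a. t \<in> D \<and> a \<in> \<Gamma> t}"

text \<open>\<open>\<Sigma>^D\<close>: sigma algebra on \<open>\<Omega> = \<Omega>(S)\<close> generated by the coordinate maps
 \<open>X_t\<close>, \<open>t \<in> D\<close> (each \<open>\<Gamma>(t)\<close> carrying the discrete sigma algebra).\<close>
definition Sigma_sup :: "('s \<Rightarrow> 'a set) \<Rightarrow> 's set \<Rightarrow> 's set \<Rightarrow> ('s \<Rightarrow> 'a) set set" where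
  "Sigma_sup \<Gamma> S D = sigma_sets (Omega \<Gamma> S)
     {{\<omega> \<in> Omega \<Gamma> S. \<omega> t \<in> B} | t B. t \<in> D \<and> B \<subseteq> \<Gamma> t}"

definition cyl :: "('s \<Rightarrow> 'a set) \<Rightarrow> 's set \<Rightarrow> 's list \<Rightarrow> 'a list \<Rightarrow> ('s \<Rightarrow> 'a) set" where
  "cyl \<Gamma> D ts as = {\<omega> \<in> Omega \<Gamma> D. \<forall>i < length ts. \<omega> (ts ! i) = as ! i}"

definition unitvec :: "'h::complex_inner \<Rightarrow> 'h" where
  "unitvec \<phi> = scaleC (complex_of_real (1 / norm \<phi>)) \<phi>"

definition Pphi :: "('s \<Rightarrow> 'a \<Rightarrow> ('h::complex_inner \<Rightarrow> 'h)) \<Rightarrow> ('s \<Rightarrow> 'a set) \<Rightarrow> 's set \<Rightarrow> 'h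
    \<Rightarrow> ('s \<Rightarrow> 'a) measure" where
  "Pphi p \<Gamma> D \<phi> = (THE M. prob_space M \<and> space M = Omega \<Gamma> D \<and> sets M = Sigma_D \<Gamma> D \<and>
     (\<forall>ts as. length ts = length as \<and> set ts \<subseteq> D \<and> (\<forall>i < length ts. as ! i \<in> \<Gamma> (ts ! i))
        \<longrightarrow> measure M (cyl \<Gamma> D ts as) = (norm (pjoint p ts as (unitvec \<phi>)))\<^sup>2))"

definition Hev :: "('s \<Rightarrow> 'a \<Rightarrow> ('h::complex_inner \<Rightarrow> 'h)) \<Rightarrow> ('s \<Rightarrow> 'a set) \<Rightarrow> 's set
    \<Rightarrow> ('s \<Rightarrow> 'a) set \<Rightarrow> 'h set" where
  "Hev p \<Gamma> D B = {\<phi> \<in> Hcomm (pfam p \<Gamma> D). \<phi> = 0 \<or> measure (Pphi p \<Gamma> D \<phi>) B = 1}"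

definition restr_event :: "('s \<Rightarrow> 'a set) \<Rightarrow> 's set \<Rightarrow> ('s \<Rightarrow> 'a) set \<Rightarrow> ('s \<Rightarrow> 'a) set" where
  "restr_event \<Gamma> D A = {\<omega> \<in> Omega \<Gamma> D. \<exists>\<omega>' \<in> A. \<forall>t \<in> D. \<omega> t = \<omega>' t}"

end

theory Submission
  imports Defs
begin


section \<open>Basic complex inner product facts\<close>


lemma cinner_self_eq_zero_iff[simp]: "cinner (x::'a::complex_inner) x = 0 \<longleftrightarrow> x = 0"
  by (rule cinner_self_eq_zero)

lemma scaleC_zero_left[simp]: "scaleC 0 (x::'a::complex_inner) = 0"
  using scaleR_scaleC[of 0 x] by simp

lemma scaleC_minus1: "scaleC (-1) (x::'a::complex_inner) = - x"
  using scaleR_scaleC[of "-1" x] by simp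

lemma scaleC_zero_right[simp]: "scaleC c (0::'a::complex_inner) = 0"
  using scaleC_add_right[of c 0 0] by simp

lemma scaleC_minus_right: "scaleC c (- (x::'a::complex_inner)) = - scaleC c x"
proof -
  have "scaleC c (- x) = scaleC c (scaleC (-1) x)" by (simp add: scaleC_minus1)
  also have "\<dots> = scaleC (-1) (scaleC c x)" by (simp add: scaleC_scaleC mult.commute)
  finally show ?thesis by (simp add: scaleC_minus1)
qed

lemma scaleC_diff_right: "scaleC c ((x::'a::complex_inner) - y) = scaleC c x - scaleC c y"
  using scaleC_add_right[of c x "- y"] by (simp add: scaleC_minus_right)

lemma scaleC_minus_left: "scaleC (- c) (x::'a::complex_inner) = - scaleC c x"
proof -
  have "scaleC (- c) x = scaleC (-1) (scaleC c x)" by (simp add: scaleC_scaleC)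
  then show ?thesis by (simp add: scaleC_minus1)
qed

lemma scaleC_diff_left: "scaleC (c - d) (x::'a::complex_inner) = scaleC c x - scaleC d x"
  using scaleC_add_left[of c "- d" x] by (simp add: scaleC_minus_left)

lemma cinner_add_right: "cinner (z::'a::complex_inner) (x + y) = cinner z x + cinner z y"
  by (metis cinner_add_left cinner_commute complex_cnj_add)

lemma cinner_scaleC_right: "cinner (x::'a::complex_inner) (scaleC c y) = c * cinner x y"
  by (metis cinner_commute cinner_scaleC_left complex_cnj_cnj complex_cnj_mult)

lemma cinner_zero_left[simp]: "cinner 0 (y::'a::complex_inner) = 0"
  using cinner_add_left[of 0 0 y] by simp

lemma cinner_zero_right[simp]: "cinner (y::'a::complex_inner) 0 = 0"
  using cinner_add_right[of y 0 0] by simp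

lemma cinner_minus_left: "cinner (- x) (y::'a::complex_inner) = - cinner x y"
  using cinner_add_left[of x "- x" y] by (simp add: eq_neg_iff_add_eq_0 add.commute)

lemma cinner_minus_right: "cinner (y::'a::complex_inner) (- x) = - cinner y x"
  using cinner_add_right[of y x "- x"] by (simp add: eq_neg_iff_add_eq_0 add.commute)

lemma cinner_diff_left: "cinner ((x::'a::complex_inner) - y) z = cinner x z - cinner y z"
  using cinner_add_left[of x "- y" z] by (simp add: cinner_minus_left)

lemma cinner_diff_right: "cinner (z::'a::complex_inner) (x - y) = cinner z x - cinner z y"
  using cinner_add_right[of z x "- y"] by (simp add: cinner_minus_right)

lemma cinner_self: "cinner (x::'a::complex_inner) x = complex_of_real ((norm x)\<^sup>2)"
proof -
  have "Im (cinner x x) = 0" "Re (cinner x x) \<ge> 0" using cinner_self_nonneg by auto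
  moreover have "(norm (x::'a::complex_inner))\<^sup>2 = Re (cinner x x)" using norm_eq_sqrt_cinner[of x] calculation by simp
  ultimately show ?thesis by (simp add: complex_eq_iff)
qed

lemma norm_sq_cinner: "(norm (x::'a::complex_inner))\<^sup>2 = Re (cinner x x)"
  using cinner_self[of x] by simp

lemma cinner_scaleR_right: "cinner (x::'a::complex_inner) (scaleR r y) = scaleR r (cinner x y)"
  by (simp add: scaleR_scaleC cinner_scaleC_right scaleR_conv_of_real)

lemma norm_scaleC: "norm (scaleC c (x::'a::complex_inner)) = cmod c * norm x"
proof -
  have "(norm (scaleC c x))\<^sup>2 = Re (cnj c * (c * cinner x x))"
    by (simp only: norm_sq_cinner cinner_scaleC_left cinner_scaleC_right) (metis mult.left_commute)
  also have "\<dots> = Re ((c * cnj c) * cinner x x)" by (metis mult.assoc mult.commute)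
  also have "\<dots> = (cmod c)\<^sup>2 * (norm x)\<^sup>2"
    by (simp only: complex_norm_square[symmetric] cinner_self of_real_mult[symmetric] Re_complex_of_real)
  finally have "(norm (scaleC c x))\<^sup>2 = (cmod c * norm x)\<^sup>2" by (simp add: power_mult_distrib)
  then show ?thesis by (simp add: power2_eq_iff_nonneg)
qed

lemma cs_identity:
  fixes x y :: "'a::complex_inner"
  assumes "y \<noteq> 0"
  shows "(norm (x - scaleC (cinner y x / complex_of_real ((norm y)\<^sup>2)) y))\<^sup>2
     = (norm x)\<^sup>2 - (cmod (cinner y x))\<^sup>2 / (norm y)\<^sup>2"
proof -
  define w where "w = cinner y x"
  define n where "n = (norm y)\<^sup>2"
  have n: "n > 0" using assms by (simp add: n_def)
  define l where "l = w / complex_of_real n"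
  have cxy: "cinner x y = cnj w" by (simp add: w_def cinner_commute[of x y])
  have "cinner (x - scaleC l y) (x - scaleC l y)
      = cinner x x - l * cnj w - cnj l * w + cnj l * l * cinner y y"
    by (simp add: cinner_diff_left cinner_diff_right cinner_scaleC_left cinner_scaleC_right cxy
        w_def algebra_simps)
  also have "\<dots> = complex_of_real ((norm x)\<^sup>2 - (cmod w)\<^sup>2 / n)"
  proof -
    have yy: "cinner y y = complex_of_real n" by (simp add: cinner_self n_def)
    have ww: "w * cnj w = complex_of_real ((cmod w)\<^sup>2)" by (metis complex_norm_square of_real_power)
    have "l * cnj w = complex_of_real ((cmod w)\<^sup>2 / n)"
      using n by (simp add: l_def ww)
    moreover have "cnj l * w = complex_of_real ((cmod w)\<^sup>2 / n)"
      using n by (simp add: l_def ww mult.commute)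
    moreover have "cnj l * l * cinner y y = w * cnj w / complex_of_real n"
      using n by (simp add: l_def yy field_simps power2_eq_square)
    then have "cnj l * l * cinner y y = complex_of_real ((cmod w)\<^sup>2 / n)"
      by (simp add: ww)
    ultimately show ?thesis by (simp add: cinner_self)
  qed
  finally show ?thesis by (simp add: norm_sq_cinner l_def w_def n_def)
qed

lemma cauchy_schwarz: "cmod (cinner (x::'a::complex_inner) y) \<le> norm x * norm y"
proof (cases "y = 0")
  case True then show ?thesis by simp
next
  case False
  define w where "w = cinner y x"
  define n where "n = (norm y)\<^sup>2"
  have n: "n > 0" using False by (simp add: n_def)
  define l where "l = w / complex_of_real n"
  have cxy: "cinner x y = cnj w" by (simp add: w_def cinner_commute[of x y])
  have "cinner (x - scaleC l y) (x - scaleC l y)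
      = cinner x x - l * cnj w - cnj l * w + cnj l * l * cinner y y"
    by (simp add: cinner_diff_left cinner_diff_right cinner_scaleC_left cinner_scaleC_right cxy
        w_def algebra_simps)
  also have "\<dots> = complex_of_real ((norm x)\<^sup>2 - (cmod w)\<^sup>2 / n)"
  proof -
    have yy: "cinner y y = complex_of_real n" by (simp add: cinner_self n_def)
    have ww: "w * cnj w = complex_of_real ((cmod w)\<^sup>2)" by (metis complex_norm_square of_real_power)
    have "l * cnj w = complex_of_real ((cmod w)\<^sup>2 / n)"
      using n by (simp add: l_def ww)
    moreover have "cnj l * w = complex_of_real ((cmod w)\<^sup>2 / n)"
      using n by (simp add: l_def ww mult.commute)
    moreover have "cnj l * l * cinner y y = w * cnj w / complex_of_real n"
      using n by (simp add: l_def yy field_simps power2_eq_square)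
    then have "cnj l * l * cinner y y = complex_of_real ((cmod w)\<^sup>2 / n)"
      by (simp add: ww)
    ultimately show ?thesis by (simp add: cinner_self)
  qed
  finally have "0 \<le> (norm x)\<^sup>2 - (cmod w)\<^sup>2 / n"
    using cinner_self_nonneg[of "x - scaleC l y"] by simp
  then have "(cmod w)\<^sup>2 \<le> (norm x)\<^sup>2 * n" using n by (simp add: field_simps)
  then have "(cmod w)\<^sup>2 \<le> (norm x * norm y)\<^sup>2" by (simp add: n_def power_mult_distrib)
  then have "cmod w \<le> norm x * norm y"
    by (rule power2_le_imp_le) simp
  then show ?thesis by (simp add: cxy)
qed

lemma bounded_linear_cinner_right: "bounded_linear (cinner (x::'a::complex_inner))"
proof (rule bounded_linear_intro[where K = "norm x"])
  show "cinner x (y + z) = cinner x y + cinner x z" for y z by (rule cinner_add_right)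
  show "cinner (x::'a::complex_inner) (scaleR r y) = scaleR r (cinner x y)" for r y by (rule cinner_scaleR_right)
  show "norm (cinner x y) \<le> norm y * norm x" for y using cauchy_schwarz[of x y] by (simp add: mult.commute)
qed

lemma cinner_eq_zero_all: "(\<And>y. cinner y x = 0) \<Longrightarrow> (x::'a::complex_inner) = 0"
  using cinner_self_eq_zero by blast


section \<open>Projections\<close>

lemma proj_add: "is_projection f \<Longrightarrow> f (x + y) = f x + f y"
  by (simp add: is_projection_def bounded_clinear_op_def)

lemma proj_scaleC: "is_projection f \<Longrightarrow> f (scaleC c x) = scaleC c (f x)"
  by (simp add: is_projection_def bounded_clinear_op_def)

lemma proj_idem: "is_projection f \<Longrightarrow> f (f x) = f x"
  by (simp add: is_projection_def fun_eq_iff)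

lemma proj_adj: "is_projection f \<Longrightarrow> cinner (f x) y = cinner x (f y)"
  by (simp add: is_projection_def)

lemma proj_zero: "is_projection f \<Longrightarrow> f 0 = 0"
  using proj_add[of f 0 0] by simp

lemma proj_minus: "is_projection f \<Longrightarrow> f (- x) = - f x"
  using proj_scaleC[of f "-1" x] by (simp add: scaleC_minus1)

lemma proj_diff: "is_projection f \<Longrightarrow> f (x - y) = f x - f y"
  using proj_add[of f x "- y"] by (simp add: proj_minus)

lemma proj_bounded_linear:
  fixes f :: "'h::complex_inner \<Rightarrow> 'h"
  assumes "is_projection f" shows "bounded_linear f"
proof -
  obtain K where K: "\<And>x. norm (f x) \<le> norm x * K"
    using assms by (auto simp: is_projection_def bounded_clinear_op_def)
  show ?thesis
  proof (rule bounded_linear_intro[where K = K])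
    show "f (x + y) = f x + f y" for x y using assms by (rule proj_add)
    show "f (scaleR r x) = scaleR r (f x)" for r x using assms by (simp add: scaleR_scaleC proj_scaleC)
  qed (rule K)
qed

lemma proj_cinner_self: "is_projection f \<Longrightarrow> cinner x (f x) = complex_of_real ((norm (f x))\<^sup>2)"
  by (metis proj_adj proj_idem cinner_self)

lemma proj_range: "is_projection f \<Longrightarrow> range f = {x. f x = x}"
  by (auto simp: proj_idem) (metis rangeI)

lemma proj_range_closed:
  fixes f :: "'h::complex_inner \<Rightarrow> 'h"
  assumes "is_projection f" shows "closed (range f)"
proof -
  have "continuous_on UNIV f" using proj_bounded_linear[OF assms]
    by (simp add: linear_continuous_on)
  then have "closed {x. f x = x}"
    using closed_Collect_eq[of f "\<lambda>x. x"] by (simp add: continuous_on_id)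
  then show ?thesis using proj_range[OF assms] by simp
qed

definition csub :: "'h::complex_inner set \<Rightarrow> bool" where
  "csub C \<longleftrightarrow> 0 \<in> C \<and> (\<forall>x\<in>C. \<forall>y\<in>C. x + y \<in> C) \<and> (\<forall>c. \<forall>x\<in>C. scaleC c x \<in> C)"

lemma csub_diff: "csub C \<Longrightarrow> x \<in> C \<Longrightarrow> y \<in> C \<Longrightarrow> x - y \<in> C"
  unfolding csub_def by (metis diff_conv_add_uminus scaleC_minus1)

lemma proj_range_csub: "is_projection f \<Longrightarrow> csub (range f)"
  unfolding csub_def proj_range by (auto simp: proj_zero proj_add proj_scaleC)

lemma parallelogram:
  fixes u v :: "'h::complex_inner"
  shows "(norm (u + v))\<^sup>2 + (norm (u - v))\<^sup>2 = 2 * (norm u)\<^sup>2 + 2 * (norm v)\<^sup>2"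
  by (simp add: norm_sq_cinner cinner_add_left cinner_add_right cinner_diff_left cinner_diff_right)

lemma pythagoras:
  fixes u v :: "'h::complex_inner"
  assumes "cinner u v = 0"
  shows "(norm (u + v))\<^sup>2 = (norm u)\<^sup>2 + (norm v)\<^sup>2"
proof -
  have "cinner v u = 0" using assms by (metis cinner_commute complex_cnj_zero)
  then show ?thesis using assms
    by (simp add: norm_sq_cinner cinner_add_left cinner_add_right)
qed

lemma closest_exists:
  fixes C :: "'h::chilbert_space set" and x :: 'h
  assumes C: "csub C" "closed C"
  shows "\<exists>c\<in>C. \<forall>c'\<in>C. cinner c' (x - c) = 0"
proof -
  define d where "d = Inf ((\<lambda>c. (norm (x - c))\<^sup>2) ` C)"
  have ne: "(\<lambda>c. (norm (x - c))\<^sup>2) ` C \<noteq> {}" using C by (auto simp: csub_def)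
  have bdd: "bdd_below ((\<lambda>c. (norm (x - c))\<^sup>2) ` C)" by (auto intro: bdd_belowI[of _ 0])
  have dle: "d \<le> (norm (x - c))\<^sup>2" if "c \<in> C" for c
    unfolding d_def using bdd that by (auto intro: cInf_lower)
  have "\<exists>c\<in>C. (norm (x - c))\<^sup>2 < d + 1 / Suc n" for n
  proof -
    have "Inf ((\<lambda>c. (norm (x - c))\<^sup>2) ` C) < d + 1 / Suc n" unfolding d_def by simp
    then show ?thesis using cInf_less_iff[OF ne bdd] by blast
  qed
  then obtain cs where cs: "\<And>n. cs n \<in> C" "\<And>n. (norm (x - cs n))\<^sup>2 < d + 1 / Suc n"
    by metis
  have mid: "scaleC (1/2) (a + b) \<in> C" if "a \<in> C" "b \<in> C" for a b
    using C that unfolding csub_def by auto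
  have par: "(norm (a - b))\<^sup>2 \<le> 2 * ((norm (x - a))\<^sup>2 - d) + 2 * ((norm (x - b))\<^sup>2 - d)"
    if "a \<in> C" "b \<in> C" for a b
  proof -
    have s2: "scaleC 2 x = x + x" using scaleC_add_left[of 1 1 x] by (simp add: scaleC_one)
    have "scaleR 2 (x - scaleC (1/2) (a + b)) = scaleC 2 x - (a + b)"
      by (simp add: scaleR_scaleC scaleC_diff_right scaleC_scaleC scaleC_one)
    then have "x - a + (x - b) = scaleR 2 (x - scaleC (1/2) (a + b))"
      by (simp add: s2)
    then have "(norm (x - a + (x - b)))\<^sup>2 = 4 * (norm (x - scaleC (1/2) (a + b)))\<^sup>2"
      by (simp add: power_mult_distrib)
    moreover have "d \<le> (norm (x - scaleC (1/2) (a + b)))\<^sup>2" using dle mid that by blast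
    moreover have "x - a - (x - b) = b - a" by simp
    ultimately show ?thesis using parallelogram[of "x - a" "x - b"]
      by (simp add: norm_minus_commute)
  qed
  have "Cauchy cs"
  proof (rule metric_CauchyI)
    fix e :: real assume e: "e > 0"
    obtain N :: nat where N: "4 / e\<^sup>2 < N" using reals_Archimedean2 by blast
    have "\<forall>m\<ge>N. \<forall>n\<ge>N. dist (cs m) (cs n) < e"
    proof (intro allI impI)
      fix m n assume mn: "N \<le> m" "N \<le> n"
      have Npos: "0 < real N" using N e by (smt (verit) divide_pos_pos zero_less_power)
      have a: "1 / real (Suc m) < 1 / N" using mn Npos by (simp add: frac_less2)
      have b: "1 / real (Suc n) < 1 / N" using mn Npos by (simp add: frac_less2)
      have "(norm (cs m - cs n))\<^sup>2 \<le> 2 * ((norm (x - cs m))\<^sup>2 - d) + 2 * ((norm (x - cs n))\<^sup>2 - d)"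
        using par cs by blast
      also have "\<dots> < 2 * (1 / N) + 2 * (1 / N)" using cs(2)[of m] cs(2)[of n] a b by (smt (verit))
      also have "\<dots> = 4 / N" by simp
      also have "\<dots> < e\<^sup>2" using N e Npos by (simp add: field_simps)
      finally have "(norm (cs m - cs n))\<^sup>2 < e\<^sup>2" .
      then show "dist (cs m) (cs n) < e" using e
        by (simp add: dist_norm) (meson abs_le_square_iff less_le_not_le not_le power2_less_imp_less)
    qed
    then show "\<exists>N. \<forall>m\<ge>N. \<forall>n\<ge>N. dist (cs m) (cs n) < e" by blast
  qed
  then obtain c where lim: "cs \<longlonglongrightarrow> c" using Cauchy_convergent_iff convergent_def by blast
  have cC: "c \<in> C" using closed_sequentially[OF C(2)] cs(1) lim by blast
  have "(\<lambda>n. (norm (x - cs n))\<^sup>2) \<longlonglongrightarrow> (norm (x - c))\<^sup>2"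
    by (intro tendsto_intros lim)
  moreover have "(\<lambda>n. d + 1 / Suc n) \<longlonglongrightarrow> d + 0"
    by (intro tendsto_intros) (use LIMSEQ_inverse_real_of_nat in \<open>simp add: inverse_eq_divide\<close>)
  ultimately have cmin: "(norm (x - c))\<^sup>2 \<le> d"
    using cs(2) by (intro LIMSEQ_le) (auto intro: less_imp_le)
  show ?thesis
  proof (intro bexI[OF _ cC] ballI)
    fix y assume yC: "y \<in> C"
    show "cinner y (x - c) = 0"
    proof (cases "y = 0")
      case True then show ?thesis by simp
    next
      case False
      define l where "l = cinner y (x - c) / complex_of_real ((norm y)\<^sup>2)"
      have "c + scaleC l y \<in> C" using C yC cC unfolding csub_def by auto
      then have "d \<le> (norm (x - (c + scaleC l y)))\<^sup>2" by (rule dle)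
      also have "x - (c + scaleC l y) = (x - c) - scaleC l y" by simp
      also have "(norm \<dots>)\<^sup>2 = (norm (x - c))\<^sup>2 - (cmod (cinner y (x - c)))\<^sup>2 / (norm y)\<^sup>2"
        unfolding l_def by (rule cs_identity[OF False])
      finally have "(cmod (cinner y (x - c)))\<^sup>2 / (norm y)\<^sup>2 \<le> 0" using cmin by linarith
      then have "(cmod (cinner y (x - c)))\<^sup>2 \<le> 0" using False
        by (simp add: divide_le_0_iff)
      then show ?thesis by simp
    qed
  qed
qed

definition orth_proj :: "'h::complex_inner set \<Rightarrow> 'h \<Rightarrow> 'h" where
  "orth_proj C x = (THE c. c \<in> C \<and> (\<forall>c'\<in>C. cinner c' (x - c) = 0))"

lemma orth_unique:
  fixes C :: "'h::complex_inner set"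
  assumes "csub C" "c1 \<in> C" "\<forall>c'\<in>C. cinner c' (x - c1) = 0" "c2 \<in> C" "\<forall>c'\<in>C. cinner c' (x - c2) = 0"
  shows "c1 = c2"
proof -
  have d: "c1 - c2 \<in> C" using assms(1,2,4) by (rule csub_diff)
  have e1: "cinner (c1 - c2) (x - c2) = 0" using assms(5) d by blast
  have e2: "cinner (c1 - c2) (x - c1) = 0" using assms(3) d by blast
  have "cinner (c1 - c2) (x - c2) - cinner (c1 - c2) (x - c1) = cinner (c1 - c2) (c1 - c2)"
    by (simp add: cinner_diff_right)
  then have "cinner (c1 - c2) (c1 - c2) = 0" using e1 e2 by simp
  then show ?thesis by simp
qed

lemma orth_proj_spec:
  fixes C :: "'h::chilbert_space set"
  assumes "csub C" "closed C"
  shows "orth_proj C x \<in> C \<and> (\<forall>c'\<in>C. cinner c' (x - orth_proj C x) = 0)"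
proof -
  obtain c where c: "c \<in> C" "\<forall>c'\<in>C. cinner c' (x - c) = 0" using closest_exists[OF assms] by blast
  show ?thesis unfolding orth_proj_def
  proof (rule theI[where a = c])
    show "c \<in> C \<and> (\<forall>c'\<in>C. cinner c' (x - c) = 0)" using c by simp
    fix c2 assume "c2 \<in> C \<and> (\<forall>c'\<in>C. cinner c' (x - c2) = 0)"
    then show "c2 = c" using orth_unique[OF assms(1) _ _ c] by blast
  qed
qed

lemma orth_proj_eq:
  fixes C :: "'h::chilbert_space set"
  assumes "csub C" "closed C" "c \<in> C" "\<forall>c'\<in>C. cinner c' (x - c) = 0"
  shows "orth_proj C x = c"
proof -
  have "orth_proj C x \<in> C" "\<forall>c'\<in>C. cinner c' (x - orth_proj C x) = 0"
    using orth_proj_spec[OF assms(1,2)] by auto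
  then show ?thesis using orth_unique[OF assms(1) _ _ assms(3,4)] by blast
qed

lemma orth_proj_is_projection:
  fixes C :: "'h::chilbert_space set"
  assumes C: "csub C" "closed C"
  shows "is_projection (orth_proj C)" "range (orth_proj C) = C"
proof -
  let ?P = "orth_proj C"
  have spC: "?P x \<in> C" for x using orth_proj_spec[OF C] by blast
  have spO: "cinner c' (x - ?P x) = 0" if "c' \<in> C" for c' x using orth_proj_spec[OF C] that by blast
  have cadd: "a + b \<in> C" if "a \<in> C" "b \<in> C" for a b using C(1) that unfolding csub_def by blast
  have cscl: "scaleC c a \<in> C" if "a \<in> C" for a c using C(1) that unfolding csub_def by blast
  have add: "?P (x + y) = ?P x + ?P y" for x y
  proof (rule orth_proj_eq[OF C])
    show "?P x + ?P y \<in> C" by (intro cadd spC)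
    show "\<forall>c'\<in>C. cinner c' (x + y - (?P x + ?P y)) = 0"
    proof
      fix c' assume c': "c' \<in> C"
      have "x + y - (?P x + ?P y) = (x - ?P x) + (y - ?P y)" by simp
      then have "cinner c' (x + y - (?P x + ?P y)) = cinner c' (x - ?P x) + cinner c' (y - ?P y)"
        by (simp only: cinner_add_right)
      then show "cinner c' (x + y - (?P x + ?P y)) = 0" using spO[OF c'] by simp
    qed
  qed
  have scl: "?P (scaleC a x) = scaleC a (?P x)" for a x
  proof (rule orth_proj_eq[OF C])
    show "scaleC a (?P x) \<in> C" by (intro cscl spC)
    show "\<forall>c'\<in>C. cinner c' (scaleC a x - scaleC a (?P x)) = 0"
    proof
      fix c' assume c': "c' \<in> C"
      have "cinner c' (scaleC a x - scaleC a (?P x)) = a * cinner c' (x - ?P x)"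
        by (simp only: scaleC_diff_right[symmetric] cinner_scaleC_right)
      then show "cinner c' (scaleC a x - scaleC a (?P x)) = 0" using spO[OF c'] by simp
    qed
  qed
  have orth2: "cinner (x - ?P x) c = 0" if "c \<in> C" for x c
  proof -
    have "cinner c (x - ?P x) = 0" by (rule spO[OF that])
    moreover have "cinner (x - ?P x) c = cnj (cinner c (x - ?P x))" by (rule cinner_commute)
    ultimately show ?thesis by simp
  qed
  have bnd: "norm (?P x) \<le> norm x * 1" for x
  proof -
    have "(norm (?P x + (x - ?P x)))\<^sup>2 = (norm (?P x))\<^sup>2 + (norm (x - ?P x))\<^sup>2"
      by (rule pythagoras, rule spO, rule spC)
    then have "(norm (?P x))\<^sup>2 \<le> (norm x)\<^sup>2" by simp
    from power2_le_imp_le[OF this] show ?thesis by simp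
  qed
  have adj: "cinner (?P x) y = cinner x (?P y)" for x y
  proof -
    have "cinner (?P x) (?P y + (y - ?P y)) = cinner (?P x) (?P y) + cinner (?P x) (y - ?P y)"
      by (rule cinner_add_right)
    then have e1: "cinner (?P x) y = cinner (?P x) (?P y) + cinner (?P x) (y - ?P y)"
      by simp
    have "cinner (?P x + (x - ?P x)) (?P y) = cinner (?P x) (?P y) + cinner (x - ?P x) (?P y)"
      by (rule cinner_add_left)
    then have e2: "cinner x (?P y) = cinner (?P x) (?P y) + cinner (x - ?P x) (?P y)"
      by simp
    have z1: "cinner (?P x) (y - ?P y) = 0" by (rule spO[OF spC])
    have z2: "cinner (x - ?P x) (?P y) = 0" by (rule orth2[OF spC])
    show ?thesis using e1 e2 z1 z2 by simp
  qed
  have fix_: "?P c = c" if "c \<in> C" for c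
    using that by (intro orth_proj_eq[OF C]) auto
  have idem: "?P \<circ> ?P = ?P"
  proof
    fix x show "(?P \<circ> ?P) x = ?P x" using fix_[OF spC[of x]] by simp
  qed
  have "bounded_clinear_op ?P"
    unfolding bounded_clinear_op_def using add scl bnd by blast
  then show "is_projection ?P"
    unfolding is_projection_def using adj idem by blast
  show "range ?P = C"
  proof
    show "range ?P \<subseteq> C" using spC by auto
    show "C \<subseteq> range ?P"
    proof
      fix c assume "c \<in> C"
      then have "c = ?P c" using fix_ by simp
      then show "c \<in> range ?P" by (rule range_eqI)
    qed
  qed
qed

lemma proj_unique_range:
  fixes q1 q2 :: "'h::complex_inner \<Rightarrow> 'h"
  assumes "is_projection q1" "is_projection q2" "range q1 = range q2"
  shows "q1 = q2"
proof
  fix x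
  have f1: "q1 (q2 y) = q2 y" for y
  proof -
    have "q2 y \<in> range q1" using assms(3) by (metis rangeI)
    then obtain z where "q2 y = q1 z" by blast
    then show ?thesis using proj_idem[OF assms(1)] by simp
  qed
  have f2: "q2 (q1 y) = q1 y" for y
  proof -
    have "q1 y \<in> range q2" using assms(3) by (metis rangeI)
    then obtain z where "q1 y = q2 z" by blast
    then show ?thesis using proj_idem[OF assms(2)] by simp
  qed
  have "cinner y (q2 x) = cinner y (q1 x)" for y
  proof -
    have "cinner y (q2 x) = cinner y (q1 (q2 x))" by (simp add: f1)
    also have "\<dots> = cinner (q1 y) (q2 x)" by (rule proj_adj[OF assms(1), symmetric])
    also have "\<dots> = cinner (q2 (q1 y)) x" by (rule proj_adj[OF assms(2), symmetric])
    also have "\<dots> = cinner (q1 y) x" by (simp add: f2)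
    also have "\<dots> = cinner y (q1 x)" by (rule proj_adj[OF assms(1)])
    finally show ?thesis .
  qed
  then have "cinner y (q1 x - q2 x) = 0" for y by (simp add: cinner_diff_right)
  then show "q1 x = q2 x" using cinner_eq_zero_all by (metis eq_iff_diff_eq_0)
qed

lemma csub_INT: "(\<And>f. f \<in> F \<Longrightarrow> csub (A f)) \<Longrightarrow> csub (\<Inter>f\<in>F. A f)"
  unfolding csub_def by simp

lemma proj_meet_spec:
  fixes ps :: "('h::chilbert_space \<Rightarrow> 'h) list"
  assumes "\<forall>f\<in>set ps. is_projection f"
  shows "is_projection (proj_meet ps) \<and> range (proj_meet ps) = (\<Inter>f\<in>set ps. range f)"
proof -
  let ?R = "\<Inter>f\<in>set ps. range f"
  have cs: "csub ?R" using assms proj_range_csub by (intro csub_INT) blast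
  have cl: "closed ?R" using assms proj_range_closed by (intro closed_INT) blast
  note op = orth_proj_is_projection[OF cs cl]
  show ?thesis unfolding proj_meet_def
  proof (rule theI[of _ "orth_proj ?R"])
    show "is_projection (orth_proj ?R) \<and> range (orth_proj ?R) = ?R" using op by blast
    fix q assume q: "is_projection q \<and> range q = ?R"
    show "q = orth_proj ?R"
      by (rule proj_unique_range) (use q op in auto)
  qed
qed

lemma proj_apply_char:
  fixes q :: "'h::complex_inner \<Rightarrow> 'h"
  assumes "is_projection q" "\<psi> \<in> range q" "\<And>y. y \<in> range q \<Longrightarrow> cinner y \<psi> = cinner y \<phi>"
  shows "q \<phi> = \<psi>"
proof -
  have "q \<phi> - \<psi> \<in> range q" using assms proj_range_csub csub_diff by blast
  moreover have "cinner y (q \<phi> - \<psi>) = 0" if "y \<in> range q" for y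
  proof -
    have a: "cinner (q y) \<phi> = cinner y (q \<phi>)" by (rule proj_adj[OF assms(1)])
    have b: "q y = y" using that proj_range[OF assms(1)] by blast
    have "cinner y (q \<phi>) = cinner y \<phi>" using a b by simp
    then show ?thesis using assms(3)[OF that] by (simp add: cinner_diff_right)
  qed
  ultimately have "cinner (q \<phi> - \<psi>) (q \<phi> - \<psi>) = 0" by blast
  then show ?thesis by simp
qed


section \<open>Products and commutation\<close>

lemma op_prod_Nil[simp]: "op_prod [] = id"
  by (simp add: op_prod_def)

lemma op_prod_Cons[simp]: "op_prod (f # xs) x = f (op_prod xs x)"
  by (simp add: op_prod_def)

lemma comm_perm:
  assumes "commutes_on \<rho> \<phi>" "set xs \<subseteq> \<rho>" "mset xs = mset ys"
  shows "op_prod xs \<phi> = op_prod ys \<phi>"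
proof -
  have "set ys = set xs" using arg_cong[OF assms(3), of set_mset] by simp
  then show ?thesis using assms unfolding commutes_on_def by auto
qed

lemma comm_remdups:
  assumes c: "commutes_on \<rho> \<phi>" and idem: "\<And>f. f \<in> \<rho> \<Longrightarrow> f \<circ> f = f"
  shows "set xs \<subseteq> \<rho> \<Longrightarrow> op_prod xs \<phi> = op_prod (remdups xs) \<phi>"
proof (induction "length xs" arbitrary: xs rule: less_induct)
  case less
  show ?case
  proof (cases "distinct xs")
    case True then show ?thesis by (simp add: distinct_remdups_id)
  next
    case False
    from not_distinct_decomp[OF False] obtain a b c x where "xs = a @ [x] @ b @ [x] @ c" by blast
    then have cx: "count (mset xs) x \<ge> 2" by simp
    define zs where "zs = remove1 x (remove1 x xs)"
    have "count (mset xs) x > 0" using cx by linarith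
    then have "x \<in># mset xs" by (simp only: count_greater_zero_iff)
    then have xin: "x \<in> set xs" by simp
    have m: "mset xs = mset (x # x # zs)"
    proof -
      define M1 where "M1 = mset xs - {#x#}"
      have x1: "x \<in># M1" using cx unfolding M1_def
        by (simp add: count_greater_zero_iff[symmetric])
      have mzs: "mset zs = M1 - {#x#}" by (simp add: zs_def M1_def mset_remove1)
      have e: "add_mset x (M1 - {#x#}) = M1" by (rule insert_DiffM[OF x1])
      have f: "add_mset x M1 = mset xs" unfolding M1_def by (rule insert_DiffM) (simp add: xin)
      show ?thesis using e f mzs by simp
    qed
    have xr: "x \<in> \<rho>" using xin less.prems by auto
    have e1: "op_prod xs \<phi> = op_prod (x # x # zs) \<phi>"
      by (rule comm_perm[OF c less.prems m])
    also have "\<dots> = op_prod (x # zs) \<phi>" using idem[OF xr] by (simp add: fun_eq_iff)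
    finally have e2: "op_prod xs \<phi> = op_prod (x # zs) \<phi>" .
    have setzs: "set (x # zs) = set xs"
    proof -
      have "set_mset (mset xs) = set_mset (mset (x # x # zs))" using m by simp
      then show ?thesis by simp
    qed
    have "length xs = length (x # x # zs)" using arg_cong[OF m, of size] by simp
    then have len: "length (x # zs) < length xs" by simp
    have "op_prod (x # zs) \<phi> = op_prod (remdups (x # zs)) \<phi>"
      by (rule less.hyps[OF len]) (simp only: setzs less.prems)
    also have "\<dots> = op_prod (remdups xs) \<phi>"
    proof (rule comm_perm[OF c])
      show "set (remdups (x # zs)) \<subseteq> \<rho>" by (simp only: set_remdups setzs less.prems)
      have d: "set (remdups (x # zs)) = set (remdups xs)" by (simp only: set_remdups setzs)
      show "mset (remdups (x # zs)) = mset (remdups xs)"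
        using iffD1[OF set_eq_iff_mset_eq_distinct[OF distinct_remdups distinct_remdups] d] .
    qed
    finally show ?thesis using e2 by simp
  qed
qed

lemma comm_set:
  assumes c: "commutes_on \<rho> \<phi>" and idem: "\<And>f. f \<in> \<rho> \<Longrightarrow> f \<circ> f = f"
    and "set xs \<subseteq> \<rho>" "set ys = set xs"
  shows "op_prod xs \<phi> = op_prod ys \<phi>"
proof -
  have "op_prod xs \<phi> = op_prod (remdups xs) \<phi>" using comm_remdups[OF c idem] assms(3) by blast
  also have "\<dots> = op_prod (remdups ys) \<phi>"
    by (rule comm_perm[OF c]) (use assms in \<open>simp_all add: set_eq_iff_mset_eq_distinct[symmetric]\<close>)
  also have "\<dots> = op_prod ys \<phi>"
  proof -
    have "set ys \<subseteq> \<rho>" using assms(3,4) by simp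
    from comm_remdups[OF c idem this] show ?thesis by (rule sym)
  qed
  finally show ?thesis .
qed

lemma comm_front:
  assumes c: "commutes_on \<rho> \<phi>" "set xs \<subseteq> \<rho>" "f \<in> set xs"
  shows "op_prod xs \<phi> = f (op_prod (remove1 f xs) \<phi>)"
proof -
  have "mset xs = mset (f # remove1 f xs)" using assms(3) by simp
  from comm_perm[OF assms(1,2) this] show ?thesis by simp
qed

lemma comm_in_range:
  assumes c: "commutes_on \<rho> \<phi>" "set xs \<subseteq> \<rho>" "f \<in> set xs" and idem: "f \<circ> f = f"
  shows "f (op_prod xs \<phi>) = op_prod xs \<phi>"
  using comm_front[OF c] idem by (simp add: fun_eq_iff)

lemma cinner_op_prod:
  fixes xs :: "('h::complex_inner \<Rightarrow> 'h) list"
  assumes "\<forall>f\<in>set xs. is_projection f \<and> f y = y"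
  shows "cinner y (op_prod xs \<phi>) = cinner y \<phi>"
  using assms
proof (induction xs)
  case Nil then show ?case by simp
next
  case (Cons f xs)
  have pf: "is_projection f" "f y = y" using Cons.prems by auto
  have "cinner y (op_prod (f # xs) \<phi>) = cinner y (f (op_prod xs \<phi>))" by simp
  also have "\<dots> = cinner (f y) (op_prod xs \<phi>)" by (rule proj_adj[OF pf(1), symmetric])
  also have "\<dots> = cinner y (op_prod xs \<phi>)" using pf(2) by simp
  also have "\<dots> = cinner y \<phi>" using Cons by simp
  finally show ?case .
qed

lemma meet_apply:
  fixes ps :: "('h::chilbert_space \<Rightarrow> 'h) list"
  assumes c: "commutes_on \<rho> \<phi>" "set ps \<subseteq> \<rho>" and pr: "\<And>f. f \<in> \<rho> \<Longrightarrow> is_projection f"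
  shows "proj_meet ps \<phi> = op_prod ps \<phi>"
proof -
  have allp: "\<forall>f\<in>set ps. is_projection f" using assms by auto
  note ms = proj_meet_spec[OF allp]
  show ?thesis
  proof (rule proj_apply_char[where q = "proj_meet ps"])
    show "is_projection (proj_meet ps)" using ms by blast
    have "op_prod ps \<phi> \<in> range f" if "f \<in> set ps" for f
    proof -
      have "f \<circ> f = f" using pr that assms(2) by (auto simp: is_projection_def)
      then have "f (op_prod ps \<phi>) = op_prod ps \<phi>" using comm_in_range[OF c that] by simp
      then show ?thesis using rangeI[of f "op_prod ps \<phi>"] by simp
    qed
    then show "op_prod ps \<phi> \<in> range (proj_meet ps)" using ms by blast
    fix y assume "y \<in> range (proj_meet ps)"
    then have "\<forall>f\<in>set ps. is_projection f \<and> f y = y" using ms allp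
      by (auto simp: proj_range)
    then show "cinner y (op_prod ps \<phi>) = cinner y \<phi>" by (rule cinner_op_prod)
  qed
qed

lemma op_prod_scaleC:
  fixes xs :: "('h::complex_inner \<Rightarrow> 'h) list"
  assumes "\<forall>f\<in>set xs. is_projection f"
  shows "op_prod xs (scaleC c \<phi>) = scaleC c (op_prod xs \<phi>)"
  using assms by (induction xs) (auto simp: proj_scaleC)

lemma commutes_scaleC:
  fixes \<rho> :: "('h::complex_inner \<Rightarrow> 'h) set"
  assumes "commutes_on \<rho> \<phi>" "\<And>f. f \<in> \<rho> \<Longrightarrow> is_projection f"
  shows "commutes_on \<rho> (scaleC c \<phi>)"
  unfolding commutes_on_def
proof (intro allI impI)
  fix xs ys assume h: "set xs \<subseteq> \<rho> \<and> set ys \<subseteq> \<rho> \<and> mset xs = mset ys"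
  then have e: "op_prod xs \<phi> = op_prod ys \<phi>" using assms(1) unfolding commutes_on_def by blast
  have px: "\<forall>f\<in>set xs. is_projection f" and py: "\<forall>f\<in>set ys. is_projection f"
    using h assms(2) by auto
  show "op_prod xs (scaleC c \<phi>) = op_prod ys (scaleC c \<phi>)"
    by (simp only: op_prod_scaleC[OF px] op_prod_scaleC[OF py] e)
qed

lemma commutes_mono: "commutes_on \<rho> \<phi> \<Longrightarrow> \<rho>' \<subseteq> \<rho> \<Longrightarrow> commutes_on \<rho>' \<phi>"
  unfolding commutes_on_def by blast

section \<open>Resolution of identity\<close>

lemma has_sum_Re:
  "(f has_sum s) A \<Longrightarrow> ((\<lambda>x. Re (f x)) has_sum Re s) A"
  using has_sum_bounded_linear[OF bounded_linear_Re] by blast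

lemma res_norm:
  fixes q :: "'a \<Rightarrow> 'h::complex_inner \<Rightarrow> 'h"
  assumes pr: "\<And>a. a \<in> G \<Longrightarrow> is_projection (q a)"
    and res: "((\<lambda>a. q a x) has_sum x) G"
  shows "((\<lambda>a. (norm (q a x))\<^sup>2) has_sum (norm x)\<^sup>2) G"
proof -
  have "((\<lambda>a. cinner x (q a x)) has_sum cinner x x) G"
    using has_sum_bounded_linear[OF bounded_linear_cinner_right res] .
  then have "((\<lambda>a. Re (cinner x (q a x))) has_sum Re (cinner x x)) G" by (rule has_sum_Re)
  moreover have "Re (cinner x (q a x)) = (norm (q a x))\<^sup>2" if "a \<in> G" for a
    using proj_cinner_self[OF pr[OF that]] by simp
  ultimately have "((\<lambda>a. (norm (q a x))\<^sup>2) has_sum Re (cinner x x)) G"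
    by (subst has_sum_cong[symmetric]) auto
  then show ?thesis by (simp only: norm_sq_cinner[symmetric])
qed

lemma res_orth:
  fixes q :: "'a \<Rightarrow> 'h::complex_inner \<Rightarrow> 'h"
  assumes pr: "\<And>a. a \<in> G \<Longrightarrow> is_projection (q a)"
    and res: "\<And>x. ((\<lambda>a. q a x) has_sum x) G"
    and ab: "a \<in> G" "b \<in> G" "a \<noteq> b"
  shows "q a (q b x) = 0"
proof -
  let ?y = "q b x"
  have hs: "((\<lambda>c. (norm (q c ?y))\<^sup>2) has_sum (norm ?y)\<^sup>2) G" by (rule res_norm[OF pr res])
  have fin: "((\<lambda>c. (norm (q c ?y))\<^sup>2) has_sum (\<Sum>c\<in>{a,b}. (norm (q c ?y))\<^sup>2)) {a, b}"
    by (rule has_sum_finite) simp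
  have "(\<Sum>c\<in>{a,b}. (norm (q c ?y))\<^sup>2) \<le> (norm ?y)\<^sup>2"
    by (rule has_sum_mono2[OF fin hs]) (use ab in auto)
  moreover have "q b ?y = ?y" using proj_idem[OF pr[OF ab(2)]] by simp
  ultimately have "(norm (q a ?y))\<^sup>2 \<le> 0" using ab by simp
  then show ?thesis by simp
qed

lemma res_empty:
  fixes q :: "'a \<Rightarrow> 'h::complex_inner \<Rightarrow> 'h" and x :: 'h
  assumes res: "\<And>x. ((\<lambda>a. q a x) has_sum x) {}"
  shows "x = 0"
  using has_sum_unique[OF res[of x] has_sum_empty] by simp


section \<open>Sums over countable sets\<close>

lemma nn_count_sub:
  "(\<integral>\<^sup>+x. f x \<partial>count_space {x\<in>A. P x}) = (\<integral>\<^sup>+x. f x * indicator {x. P x} x \<partial>count_space A)"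
proof -
  have "(\<integral>\<^sup>+x. f x \<partial>count_space {x\<in>A. P x}) = (\<integral>\<^sup>+x. f x * indicator {x\<in>A. P x} x \<partial>count_space UNIV)"
    by (rule nn_integral_count_space_indicator) simp
  also have "\<dots> = (\<integral>\<^sup>+x. (f x * indicator {x. P x} x) * indicator A x \<partial>count_space UNIV)"
    by (intro nn_integral_cong) (auto split: split_indicator)
  also have "\<dots> = (\<integral>\<^sup>+x. f x * indicator {x. P x} x \<partial>count_space A)"
    by (rule nn_integral_count_space_indicator[symmetric]) simp
  finally show ?thesis .
qed

lemma nn_count_single:
  assumes "y \<in> Y"
  shows "(\<integral>\<^sup>+z. c * indicator {y} z \<partial>count_space Y) = c"
proof -
  have "(\<integral>\<^sup>+z. c * indicator {y} z \<partial>count_space Y) = (\<integral>\<^sup>+z. (c * indicator {y} z) * indicator Y z \<partial>count_space UNIV)"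
    by (rule nn_integral_count_space_indicator) simp
  also have "\<dots> = (\<integral>\<^sup>+z. c * indicator {y} z \<partial>count_space UNIV)"
    using assms by (intro nn_integral_cong) (auto split: split_indicator)
  also have "\<dots> = c * emeasure (count_space UNIV) {y}"
    by (rule nn_integral_cmult_indicator) simp
  also have "\<dots> = c" by simp
  finally show ?thesis .
qed

lemma nn_fiber:
  assumes Y: "countable Y" and h: "\<And>x. x \<in> A \<Longrightarrow> h x \<in> Y"
  shows "(\<integral>\<^sup>+x. f x \<partial>count_space A) = (\<integral>\<^sup>+y. (\<integral>\<^sup>+x. f x \<partial>count_space {x\<in>A. h x = y}) \<partial>count_space Y)"
proof -
  have "(\<integral>\<^sup>+y. (\<integral>\<^sup>+x. f x \<partial>count_space {x\<in>A. h x = y}) \<partial>count_space Y)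
      = (\<integral>\<^sup>+y. (\<integral>\<^sup>+x. f x * indicator {x. h x = y} x \<partial>count_space A) \<partial>count_space Y)"
    by (simp only: nn_count_sub)
  also have "\<dots> = (\<integral>\<^sup>+x. (\<integral>\<^sup>+y. f x * indicator {x. h x = y} x \<partial>count_space Y) \<partial>count_space A)"
    by (rule nn_integral_count_space_nn_integral[OF Y, symmetric]) simp
  also have "\<dots> = (\<integral>\<^sup>+x. f x \<partial>count_space A)"
  proof (intro nn_integral_cong)
    fix x assume "x \<in> space (count_space A)"
    then have hx: "h x \<in> Y" using h by simp
    have "(\<integral>\<^sup>+y. f x * indicator {x. h x = y} x \<partial>count_space Y) = (\<integral>\<^sup>+y. f x * indicator {h x} y \<partial>count_space Y)"
      by (intro nn_integral_cong) (auto split: split_indicator)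
    also have "\<dots> = f x" by (rule nn_count_single[OF hx])
    finally show "(\<integral>\<^sup>+y. f x * indicator {x. h x = y} x \<partial>count_space Y) = f x" .
  qed
  finally show ?thesis by (rule sym)
qed

lemma has_sum_nn:
  fixes f :: "'a \<Rightarrow> real"
  assumes hs: "(f has_sum s) A" and nn: "\<And>x. x \<in> A \<Longrightarrow> f x \<ge> 0"
  shows "(\<integral>\<^sup>+x. ennreal (f x) \<partial>count_space A) = ennreal s"
proof -
  have "f summable_on A" using hs by (rule has_sum_imp_summable)
  moreover have "norm (f x) = f x" if "x \<in> A" for x using nn[OF that] by simp
  ultimately have "(\<lambda>x. norm (f x)) summable_on A" using summable_on_cong by metis
  then have abs: "Infinite_Set_Sum.abs_summable_on f A" using abs_summable_equivalent[of f A] by simp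
  then have "(\<integral>\<^sup>+x. ennreal (f x) \<partial>count_space A) = ennreal (infsetsum f A)"
    using nn_integral_conv_infsetsum[OF abs nn] by simp
  also have "infsetsum f A = infsum f A" using abs by (rule infsetsum_infsum)
  also have "infsum f A = s" using hs by (rule infsumI)
  finally show ?thesis .
qed


locale qsetup =
  fixes S :: "'s set" and \<Gamma> :: "'s \<Rightarrow> 'a set" and p :: "'s \<Rightarrow> 'a \<Rightarrow> ('h::chilbert_space \<Rightarrow> 'h)"
    and u :: 'h
  assumes countable: "\<And>t. t \<in> S \<Longrightarrow> countable (\<Gamma> t)"
    and proj: "\<And>t a. t \<in> S \<Longrightarrow> a \<in> \<Gamma> t \<Longrightarrow> is_projection (p t a)"
    and resolution: "\<And>t \<phi>. t \<in> S \<Longrightarrow> ((\<lambda>a. p t a \<phi>) has_sum \<phi>) (\<Gamma> t)"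
    and ne: "\<And>t. t \<in> S \<Longrightarrow> \<Gamma> t \<noteq> {}"
    and ucomm: "commutes_on (pfam p \<Gamma> S) u"
    and unorm: "norm u = 1"
begin

definition lst :: "'s set \<Rightarrow> 's list" where
  "lst J = (SOME xs. set xs = J \<and> distinct xs)"

definition FF :: "'s set \<Rightarrow> ('s \<Rightarrow> 'a) \<Rightarrow> 'h" where
  "FF J \<omega> = op_prod (map (\<lambda>t. p t (\<omega> t)) (lst J)) u"

definition W :: "'s set \<Rightarrow> ('s \<Rightarrow> 'a) \<Rightarrow> ennreal" where
  "W J \<omega> = ennreal ((norm (FF J \<omega>))\<^sup>2)"

lemma lst: "finite J \<Longrightarrow> set (lst J) = J \<and> distinct (lst J)"
  unfolding lst_def by (rule someI_ex) (rule finite_distinct_list)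

lemma pfam_proj: "f \<in> pfam p \<Gamma> S \<Longrightarrow> is_projection f"
  unfolding pfam_def using proj by blast

lemma pfam_idem: "f \<in> pfam p \<Gamma> S \<Longrightarrow> f \<circ> f = f"
  using pfam_proj by (auto simp: is_projection_def)

lemma pfamI: "t \<in> S \<Longrightarrow> a \<in> \<Gamma> t \<Longrightarrow> p t a \<in> pfam p \<Gamma> S"
  unfolding pfam_def by blast

lemma FF_list:
  assumes "finite J" "J \<subseteq> S" "\<And>t. t \<in> J \<Longrightarrow> \<omega> t \<in> \<Gamma> t" "set ts = J"
  shows "op_prod (map (\<lambda>t. p t (\<omega> t)) ts) u = FF J \<omega>"
  unfolding FF_def
proof (rule comm_set[OF ucomm pfam_idem])
  show "set (map (\<lambda>t. p t (\<omega> t)) ts) \<subseteq> pfam p \<Gamma> S" using assms by (auto intro: pfamI)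
  show "set (map (\<lambda>t. p t (\<omega> t)) (lst J)) = set (map (\<lambda>t. p t (\<omega> t)) ts)"
    using lst[OF assms(1)] assms(4) by simp
qed

lemma FF_insert:
  assumes "finite J" "insert s J \<subseteq> S" "\<And>t. t \<in> insert s J \<Longrightarrow> \<omega> t \<in> \<Gamma> t"
  shows "FF (insert s J) \<omega> = p s (\<omega> s) (FF J \<omega>)"
proof -
  have "FF (insert s J) \<omega> = op_prod (map (\<lambda>t. p t (\<omega> t)) (s # lst J)) u"
    by (rule FF_list[symmetric]) (use assms lst[OF assms(1)] in auto)
  also have "\<dots> = p s (\<omega> s) (FF J \<omega>)" by (simp add: FF_def)
  finally show ?thesis .
qed

lemma FF_cong:
  assumes "finite J" "\<And>t. t \<in> J \<Longrightarrow> \<omega> t = \<omega>' t"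
  shows "FF J \<omega> = FF J \<omega>'"
proof -
  have "map (\<lambda>t. p t (\<omega> t)) (lst J) = map (\<lambda>t. p t (\<omega>' t)) (lst J)"
    using assms lst[OF assms(1)] by (intro map_cong) auto
  then show ?thesis by (simp only: FF_def)
qed

lemma FF_empty: "FF {} \<omega> = u"
proof -
  have "set (lst {}) = {}" using lst[of "{}"] by simp
  then show ?thesis by (simp add: FF_def)
qed

lemma W_insert_sum:
  assumes J: "finite J" "J \<subseteq> S" and s: "s \<in> S" "s \<notin> J" and \<omega>: "\<omega> \<in> PiE J \<Gamma>"
  shows "(\<integral>\<^sup>+a. W (insert s J) (fun_upd \<omega> s a) \<partial>count_space (\<Gamma> s)) = W J \<omega>"
proof -
  have e: "W (insert s J) ((fun_upd \<omega> s a)) = ennreal ((norm (p s a (FF J \<omega>)))\<^sup>2)" if "a \<in> \<Gamma> s" for a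
  proof -
    have "FF (insert s J) ((fun_upd \<omega> s a)) = p s ((fun_upd \<omega> s a) s) (FF J ((fun_upd \<omega> s a)))"
      by (rule FF_insert[OF J(1)]) (use J s \<omega> that in \<open>auto simp: PiE_iff\<close>)
    then have "FF (insert s J) ((fun_upd \<omega> s a)) = p s a (FF J ((fun_upd \<omega> s a)))" by simp
    also have "FF J ((fun_upd \<omega> s a)) = FF J \<omega>" using s J by (intro FF_cong) auto
    finally show ?thesis by (simp only: W_def)
  qed
  have "(\<integral>\<^sup>+a. W (insert s J) (fun_upd \<omega> s a) \<partial>count_space (\<Gamma> s))
      = (\<integral>\<^sup>+a. ennreal ((norm (p s a (FF J \<omega>)))\<^sup>2) \<partial>count_space (\<Gamma> s))"
    using e by (intro nn_integral_cong) simp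
  also have "\<dots> = ennreal ((norm (FF J \<omega>))\<^sup>2)"
    by (rule has_sum_nn[OF res_norm]) (use proj resolution s in auto)
  finally show ?thesis by (simp add: W_def)
qed

lemma countable_PiE_G: "finite J \<Longrightarrow> J \<subseteq> S \<Longrightarrow> countable (PiE J \<Gamma>)"
  using countable by (intro countable_PiE) auto

lemma marg_aux:
  assumes "finite K"
  shows "K \<inter> J = {} \<Longrightarrow> finite J \<Longrightarrow> J \<union> K \<subseteq> S \<Longrightarrow> \<omega> \<in> PiE J \<Gamma> \<Longrightarrow>
    (\<integral>\<^sup>+\<eta>. W (J \<union> K) \<eta> \<partial>count_space {\<eta> \<in> PiE (J \<union> K) \<Gamma>. restrict \<eta> J = \<omega>}) = W J \<omega>"
  using assms
proof (induction K rule: finite_induct)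
  case empty
  have eq: "{\<eta> \<in> PiE J \<Gamma>. restrict \<eta> J = \<omega>} = {\<omega>}"
    using empty.prems(4) by (auto simp: PiE_iff extensional_restrict)
  show ?case unfolding Un_empty_right eq by (simp add: nn_integral_count_space_finite)
next
  case (insert s K)
  let ?H' = "J \<union> K" and ?H = "J \<union> insert s K"
  have sJ: "s \<notin> J" using insert.prems(1) by auto
  have sH': "s \<notin> ?H'" using sJ insert.hyps(2) by auto
  have H: "?H = insert s ?H'" by auto
  have finH': "finite ?H'" using insert by auto
  have H'S: "?H' \<subseteq> S" and sS: "s \<in> S" using insert.prems(3) by auto
  let ?A = "{\<eta> \<in> PiE ?H \<Gamma>. restrict \<eta> J = \<omega>}"
  let ?Y = "{\<eta>' \<in> PiE ?H' \<Gamma>. restrict \<eta>' J = \<omega>}"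
  have cY: "countable ?Y"
    using countable_PiE_G[OF finH' H'S] by (rule countable_subset[rotated]) auto
  have hA: "restrict \<eta> ?H' \<in> ?Y" if "\<eta> \<in> ?A" for \<eta>
  proof -
    from that have e: "\<eta> \<in> PiE ?H \<Gamma>" "restrict \<eta> J = \<omega>" by auto
    have "restrict \<eta> ?H' \<in> PiE ?H' \<Gamma>" using e(1) by (simp add: restrict_PiE_iff PiE_iff)
    moreover have "restrict (restrict \<eta> ?H') J = restrict \<eta> J" by (auto simp: restrict_def)
    ultimately show ?thesis using e(2) by simp
  qed
  have "(\<integral>\<^sup>+\<eta>. W ?H \<eta> \<partial>count_space ?A)
      = (\<integral>\<^sup>+\<eta>'. (\<integral>\<^sup>+\<eta>. W ?H \<eta> \<partial>count_space {\<eta> \<in> ?A. restrict \<eta> ?H' = \<eta>'}) \<partial>count_space ?Y)"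
    by (rule nn_fiber[OF cY hA])
  also have "\<dots> = (\<integral>\<^sup>+\<eta>'. W ?H' \<eta>' \<partial>count_space ?Y)"
  proof (intro nn_integral_cong)
    fix \<eta>' assume "\<eta>' \<in> space (count_space ?Y)"
    then have \<eta>': "\<eta>' \<in> PiE ?H' \<Gamma>" "restrict \<eta>' J = \<omega>" by auto
    have bij: "bij_betw (\<lambda>a. (fun_upd \<eta>' s a)) (\<Gamma> s) {\<eta> \<in> ?A. restrict \<eta> ?H' = \<eta>'}"
    proof (rule bij_betwI')
      show "\<And>a b. a \<in> \<Gamma> s \<Longrightarrow> b \<in> \<Gamma> s \<Longrightarrow> ((fun_upd \<eta>' s a) = (fun_upd \<eta>' s b)) = (a = b)"
        by (metis fun_upd_same)
      show "(fun_upd \<eta>' s a) \<in> {\<eta> \<in> ?A. restrict \<eta> ?H' = \<eta>'}" if "a \<in> \<Gamma> s" for a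
      proof -
        have "(fun_upd \<eta>' s a) \<in> PiE ?H \<Gamma>" using \<eta>'(1) that sH' by (auto simp: PiE_iff extensional_def)
        moreover have "restrict ((fun_upd \<eta>' s a)) J = restrict \<eta>' J" using sJ by (auto simp: restrict_def)
        then have "restrict ((fun_upd \<eta>' s a)) J = \<omega>" using \<eta>'(2) by simp
        moreover have "restrict ((fun_upd \<eta>' s a)) ?H' = \<eta>'" using \<eta>'(1) sH'
          by (auto simp: restrict_def fun_eq_iff PiE_iff extensional_def)
        ultimately show ?thesis by blast
      qed
      show "\<exists>a\<in>\<Gamma> s. \<eta> = (fun_upd \<eta>' s a)" if "\<eta> \<in> {\<eta> \<in> ?A. restrict \<eta> ?H' = \<eta>'}" for \<eta>
      proof (intro bexI)
        from that have e: "\<eta> \<in> PiE ?H \<Gamma>" "restrict \<eta> ?H' = \<eta>'" by auto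
        show "\<eta> s \<in> \<Gamma> s" using e(1) by (auto simp: PiE_iff)
        show "\<eta> = (fun_upd \<eta>' s (\<eta> s))"
        proof
          fix t show "\<eta> t = ((fun_upd \<eta>' s (\<eta> s))) t"
            using e sH' by (cases "t = s"; cases "t \<in> ?H'") (auto simp: restrict_def PiE_iff extensional_def)
        qed
      qed
    qed
    have "(\<integral>\<^sup>+\<eta>. W ?H \<eta> \<partial>count_space {\<eta> \<in> ?A. restrict \<eta> ?H' = \<eta>'})
        = (\<integral>\<^sup>+a. W ?H (fun_upd \<eta>' s a) \<partial>count_space (\<Gamma> s))"
      by (rule nn_integral_bij_count_space[OF bij, symmetric])
    also have "\<dots> = W ?H' \<eta>'"
      unfolding H by (rule W_insert_sum[OF finH' H'S sS sH' \<eta>'(1)])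
    finally show "(\<integral>\<^sup>+\<eta>. W ?H \<eta> \<partial>count_space {\<eta> \<in> ?A. restrict \<eta> ?H' = \<eta>'}) = W ?H' \<eta>'" .
  qed
  also have "\<dots> = W J \<omega>"
    by (rule insert.IH) (use insert.prems in auto)
  finally show ?case .
qed

lemma marg:
  assumes "finite H" "J \<subseteq> H" "H \<subseteq> S" "\<omega> \<in> PiE J \<Gamma>"
  shows "(\<integral>\<^sup>+\<eta>. W H \<eta> \<partial>count_space {\<eta> \<in> PiE H \<Gamma>. restrict \<eta> J = \<omega>}) = W J \<omega>"
proof -
  have "H = J \<union> (H - J)" using assms by auto
  then show ?thesis
    using marg_aux[of "H - J" J \<omega>] assms finite_subset[OF assms(2,1)] by auto
qed

lemma total:
  assumes "finite J" "J \<subseteq> S"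
  shows "(\<integral>\<^sup>+\<eta>. W J \<eta> \<partial>count_space (PiE J \<Gamma>)) = 1"
proof -
  have "{\<eta> \<in> PiE J \<Gamma>. restrict \<eta> {} = (\<lambda>_. undefined)} = PiE J \<Gamma>" by auto
  moreover have "(\<lambda>_. undefined) \<in> PiE {} \<Gamma>" by simp
  ultimately have "(\<integral>\<^sup>+\<eta>. W J \<eta> \<partial>count_space (PiE J \<Gamma>)) = W {} (\<lambda>_. undefined)"
    using marg[OF assms(1) _ assms(2), of "{}" "\<lambda>_. undefined"] by simp
  also have "\<dots> = 1" by (simp add: W_def FF_empty unorm)
  finally show ?thesis .
qed

end


type_synonym nd = "nat discrete"

lemma sets_PiM_disc:
  assumes "finite J"
  shows "sets (PiM J (\<lambda>_. borel :: nd measure)) = Pow (PiE J (\<lambda>_. UNIV))"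
proof -
  have "sets (PiM J (\<lambda>_. borel :: nd measure)) = sets (PiM J (\<lambda>_. count_space (UNIV :: nd set)))"
    by (rule sets_PiM_cong) (simp_all add: sets_borel_eq_count_space)
  also have "PiM J (\<lambda>_. count_space (UNIV :: nd set)) = count_space (PiE J (\<lambda>_. UNIV))"
    using assms by (intro count_space_PiM_finite) simp_all
  finally show ?thesis by simp
qed

lemma space_PiM_disc: "space (PiM J (\<lambda>_. borel :: nd measure)) = PiE J (\<lambda>_. UNIV)"
  by (simp add: space_PiM)

context qsetup begin

definition Q :: "'s set \<Rightarrow> ('s \<Rightarrow> 'a) measure" where
  "Q J = density (count_space (PiE J \<Gamma>)) (W J)"

definition enc :: "'s set \<Rightarrow> ('s \<Rightarrow> 'a) \<Rightarrow> ('s \<Rightarrow> nd)" where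
  "enc J \<omega> = (\<lambda>t\<in>J. discrete (to_nat_on (\<Gamma> t) (\<omega> t)))"

definition PJ :: "'s set \<Rightarrow> ('s \<Rightarrow> nd) measure" where
  "PJ J = distr (Q J) (PiM J (\<lambda>_. borel)) (enc J)"

lemma sets_Q[simp]: "sets (Q J) = Pow (PiE J \<Gamma>)"
  by (simp add: Q_def)

lemma space_Q[simp]: "space (Q J) = PiE J \<Gamma>"
  by (simp add: Q_def)

lemma emeasure_Q:
  assumes "B \<subseteq> PiE J \<Gamma>"
  shows "emeasure (Q J) B = (\<integral>\<^sup>+\<eta>. W J \<eta> \<partial>count_space B)"
proof -
  have "emeasure (Q J) B = (\<integral>\<^sup>+\<eta>. W J \<eta> * indicator B \<eta> \<partial>count_space (PiE J \<Gamma>))"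
    unfolding Q_def using assms by (subst emeasure_density) auto
  also have "\<dots> = (\<integral>\<^sup>+\<eta>. W J \<eta> \<partial>count_space {\<eta> \<in> PiE J \<Gamma>. \<eta> \<in> B})"
    using nn_count_sub[where f="W J" and A="PiE J \<Gamma>" and P="\<lambda>\<eta>. \<eta> \<in> B"] by simp
  also have "{\<eta> \<in> PiE J \<Gamma>. \<eta> \<in> B} = B" using assms by auto
  finally show ?thesis .
qed

lemma prob_Q:
  assumes "finite J" "J \<subseteq> S"
  shows "prob_space (Q J)"
proof (rule prob_spaceI)
  show "emeasure (Q J) (space (Q J)) = 1"
    using emeasure_Q[of "PiE J \<Gamma>" J] total[OF assms] by simp
qed

lemma enc_in: "enc J \<omega> \<in> PiE J (\<lambda>_. UNIV)"
  by (simp add: enc_def)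

lemma enc_meas: "enc J \<in> Q J \<rightarrow>\<^sub>M PiM J (\<lambda>_. borel)"
proof -
  have "enc J \<in> count_space (PiE J \<Gamma>) \<rightarrow>\<^sub>M PiM J (\<lambda>_. borel)"
    by (simp add: space_PiM_disc enc_in)
  then show ?thesis by (simp add: Q_def)
qed

lemma prob_PJ:
  assumes "finite J" "J \<subseteq> S"
  shows "prob_space (PJ J)"
  unfolding PJ_def by (rule prob_space.prob_space_distr[OF prob_Q[OF assms] enc_meas])

lemma restrict_enc: "J \<subseteq> H \<Longrightarrow> restrict (enc H \<omega>) J = enc J (restrict \<omega> J)"
  by (auto simp: enc_def restrict_def fun_eq_iff)

lemma Q_marg:
  assumes "J \<subseteq> H" "finite H" "H \<subseteq> S"
  shows "distr (Q H) (count_space (PiE J \<Gamma>)) (\<lambda>\<omega>. restrict \<omega> J) = Q J"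
proof -
  have fJ: "finite J" using assms finite_subset by blast
  have meas: "(\<lambda>\<omega>. restrict \<omega> J) \<in> Q H \<rightarrow>\<^sub>M count_space (PiE J \<Gamma>)"
  proof -
    have "(\<lambda>\<omega>. restrict \<omega> J) \<in> count_space (PiE H \<Gamma>) \<rightarrow>\<^sub>M count_space (PiE J \<Gamma>)"
      using assms(1) by (auto simp: PiE_iff)
    then show ?thesis by (simp add: Q_def)
  qed
  show ?thesis
  proof (rule measure_eqI_countable[where A = "PiE J \<Gamma>"])
    show "sets (distr (Q H) (count_space (PiE J \<Gamma>)) (\<lambda>\<omega>. restrict \<omega> J)) = Pow (PiE J \<Gamma>)" by simp
    show "sets (Q J) = Pow (PiE J \<Gamma>)" by simp
    show "countable (PiE J \<Gamma>)" using countable_PiE_G[OF fJ] assms by auto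
    fix \<omega> assume \<omega>: "\<omega> \<in> PiE J \<Gamma>"
    have "emeasure (distr (Q H) (count_space (PiE J \<Gamma>)) (\<lambda>\<omega>. restrict \<omega> J)) {\<omega>}
        = emeasure (Q H) ((\<lambda>\<omega>. restrict \<omega> J) -` {\<omega>} \<inter> space (Q H))"
      using \<omega> by (intro emeasure_distr[OF meas]) simp
    also have "(\<lambda>\<omega>. restrict \<omega> J) -` {\<omega>} \<inter> space (Q H) = {\<eta> \<in> PiE H \<Gamma>. restrict \<eta> J = \<omega>}"
      by auto
    also have "emeasure (Q H) \<dots> = (\<integral>\<^sup>+\<eta>. W H \<eta> \<partial>count_space {\<eta> \<in> PiE H \<Gamma>. restrict \<eta> J = \<omega>})"
      by (rule emeasure_Q) auto
    also have "\<dots> = W J \<omega>" by (rule marg[OF assms(2,1,3) \<omega>])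
    also have "\<dots> = emeasure (Q J) {\<omega>}"
      using \<omega> by (simp add: emeasure_Q nn_integral_count_space_finite)
    finally show "emeasure (distr (Q H) (count_space (PiE J \<Gamma>)) (\<lambda>\<omega>. restrict \<omega> J)) {\<omega>} = emeasure (Q J) {\<omega>}" .
  qed
qed

lemma PJ_proj:
  assumes "J \<subseteq> H" "finite H" "H \<subseteq> S"
  shows "PJ J = distr (PJ H) (PiM J (\<lambda>_. borel)) (\<lambda>f. restrict f J)"
proof -
  have m1: "(\<lambda>f. restrict f J) \<in> PiM H (\<lambda>_. borel :: nd measure) \<rightarrow>\<^sub>M PiM J (\<lambda>_. borel)"
    by (rule measurable_restrict_subset[OF assms(1)])
  have m2: "(\<lambda>\<omega>. restrict \<omega> J) \<in> Q H \<rightarrow>\<^sub>M count_space (PiE J \<Gamma>)"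
  proof -
    have "(\<lambda>\<omega>. restrict \<omega> J) \<in> count_space (PiE H \<Gamma>) \<rightarrow>\<^sub>M count_space (PiE J \<Gamma>)"
      using assms(1) by (auto simp: PiE_iff)
    then show ?thesis by (simp add: Q_def)
  qed
  have m3: "enc J \<in> count_space (PiE J \<Gamma>) \<rightarrow>\<^sub>M PiM J (\<lambda>_. borel)"
    by (simp add: space_PiM_disc enc_in)
  have "distr (PJ H) (PiM J (\<lambda>_. borel)) (\<lambda>f. restrict f J)
      = distr (Q H) (PiM J (\<lambda>_. borel)) ((\<lambda>f. restrict f J) \<circ> enc H)"
    unfolding PJ_def by (rule distr_distr[OF m1 enc_meas])
  also have "\<dots> = distr (Q H) (PiM J (\<lambda>_. borel)) (enc J \<circ> (\<lambda>\<omega>. restrict \<omega> J))"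
    by (rule distr_cong) (simp_all add: restrict_enc[OF assms(1)])
  also have "\<dots> = distr (distr (Q H) (count_space (PiE J \<Gamma>)) (\<lambda>\<omega>. restrict \<omega> J)) (PiM J (\<lambda>_. borel)) (enc J)"
    by (rule distr_distr[OF m3 m2, symmetric])
  also have "\<dots> = PJ J" unfolding PJ_def Q_marg[OF assms] ..
  finally show ?thesis by (rule sym)
qed

lemma pp: "polish_projective S PJ"
  unfolding polish_projective_def
proof (rule projective_family.intro)
  fix J H assume "J \<subseteq> H" "finite H" "H \<subseteq> S"
  then show "PJ J = distr (PJ H) (PiM J (\<lambda>_. borel)) (\<lambda>f. restrict f J)" by (rule PJ_proj)
next
  fix J assume "finite J" "J \<subseteq> S"
  then show "prob_space (PJ J)" by (rule prob_PJ)
qed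

definition lim :: "('s \<Rightarrow> nd) measure" where
  "lim = projective_family.lim S PJ (\<lambda>_. borel)"

lemma prob_lim: "prob_space lim"
proof -
  interpret PP: polish_projective S PJ by (rule pp)
  show ?thesis unfolding lim_def by (rule PP.P.prob_space_axioms)
qed

lemma sets_lim: "sets lim = sets (PiM S (\<lambda>_. borel))"
  unfolding lim_def using projective_family.sets_lim[OF pp[unfolded polish_projective_def]] .

lemma space_lim: "space lim = PiE S (\<lambda>_. UNIV)"
  unfolding lim_def using projective_family.space_lim[OF pp[unfolded polish_projective_def]]
  by (simp add: space_PiM)

lemma measure_lim:
  assumes "J \<subseteq> S" "finite J" "X \<in> sets (PiM J (\<lambda>_. borel))"
  shows "measure lim (prod_emb S (\<lambda>_. borel) J X) = measure (PJ J) X"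
  unfolding lim_def using polish_projective.measure_lim_emb[OF pp assms] .

end


definition gens :: "('s \<Rightarrow> 'a set) \<Rightarrow> 's set \<Rightarrow> ('s \<Rightarrow> 'a) set set" where
  "gens \<Gamma> D = {{\<omega> \<in> Omega \<Gamma> D. \<omega> t = a} | t a. t \<in> D \<and> a \<in> \<Gamma> t}"

definition Msp :: "('s \<Rightarrow> 'a set) \<Rightarrow> 's set \<Rightarrow> ('s \<Rightarrow> 'a) measure" where
  "Msp \<Gamma> D = measure_of (Omega \<Gamma> D) (gens \<Gamma> D) (\<lambda>_. 0)"

definition valid :: "('s \<Rightarrow> 'a set) \<Rightarrow> 's set \<Rightarrow> 's list \<Rightarrow> 'a list \<Rightarrow> bool" where
  "valid \<Gamma> D ts as \<longleftrightarrow> length ts = length as \<and> set ts \<subseteq> D \<and> (\<forall>i < length ts. as ! i \<in> \<Gamma> (ts ! i))"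

definition cylset :: "('s \<Rightarrow> 'a set) \<Rightarrow> 's set \<Rightarrow> ('s \<Rightarrow> 'a) set set" where
  "cylset \<Gamma> D = {cyl \<Gamma> D ts as | ts as. valid \<Gamma> D ts as}"

lemma gens_Pow: "gens \<Gamma> D \<subseteq> Pow (Omega \<Gamma> D)"
  unfolding gens_def by auto

lemma space_Msp[simp]: "space (Msp \<Gamma> D) = Omega \<Gamma> D"
  unfolding Msp_def by (rule space_measure_of[OF gens_Pow])

lemma sets_Msp[simp]: "sets (Msp \<Gamma> D) = Sigma_D \<Gamma> D"
  unfolding Msp_def Sigma_D_def gens_def[symmetric] by (rule sets_measure_of[OF gens_Pow])

lemma cyl_sub: "cyl \<Gamma> D ts as \<subseteq> Omega \<Gamma> D"
  unfolding cyl_def by auto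

lemma cyl_Nil: "cyl \<Gamma> D [] [] = Omega \<Gamma> D"
  unfolding cyl_def by auto

lemma cyl_Cons: "cyl \<Gamma> D (t # ts) (a # as) = {\<omega> \<in> Omega \<Gamma> D. \<omega> t = a} \<inter> cyl \<Gamma> D ts as"
  unfolding cyl_def by (auto simp: less_Suc_eq_0_disj)

lemma cyl_append:
  assumes len: "length ts = length as"
  shows "cyl \<Gamma> D (ts @ ts') (as @ as') = cyl \<Gamma> D ts as \<inter> cyl \<Gamma> D ts' as'"
proof -
  have "(\<forall>i < length (ts @ ts'). \<omega> ((ts @ ts') ! i) = (as @ as') ! i) \<longleftrightarrow>
        (\<forall>i < length ts. \<omega> (ts ! i) = as ! i) \<and> (\<forall>i < length ts'. \<omega> (ts' ! i) = as' ! i)" for \<omega>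
  proof safe
    fix i assume h: "\<forall>i < length (ts @ ts'). \<omega> ((ts @ ts') ! i) = (as @ as') ! i"
    show "\<omega> (ts ! i) = as ! i" if "i < length ts" using h[rule_format, of i] that len by (simp add: nth_append)
    show "\<omega> (ts' ! i) = as' ! i" if "i < length ts'" using h[rule_format, of "length ts + i"] that len
      by (simp add: nth_append)
  next
    fix i assume h1: "\<forall>i < length ts. \<omega> (ts ! i) = as ! i" and h2: "\<forall>i < length ts'. \<omega> (ts' ! i) = as' ! i"
      and i: "i < length (ts @ ts')"
    show "\<omega> ((ts @ ts') ! i) = (as @ as') ! i"
    proof (cases "i < length ts")
      case True then show ?thesis using h1 len by (simp add: nth_append)
    next
      case False
      then have "i - length ts < length ts'" using i by simp
      then show ?thesis using h2 False len by (simp add: nth_append)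
    qed
  qed
  then show ?thesis unfolding cyl_def by blast
qed

lemma gens_sub_Sigma: "gens \<Gamma> D \<subseteq> Sigma_D \<Gamma> D"
  unfolding Sigma_D_def gens_def by (auto intro: sigma_sets.Basic)


lemma cyl_in:
  "valid \<Gamma> D ts as \<Longrightarrow> cyl \<Gamma> D ts as \<in> Sigma_D \<Gamma> D"
proof (induction ts arbitrary: as)
  case Nil
  then have "as = []" by (simp add: valid_def)
  then show ?case using cyl_Nil[of \<Gamma> D] sigma_sets_top by (simp add: Sigma_D_def)
next
  case (Cons t ts)
  then obtain a as' where as: "as = a # as'" by (cases as) (auto simp: valid_def)
  have v: "valid \<Gamma> D ts as'" using Cons.prems as by (fastforce simp: valid_def)
  have g: "{\<omega> \<in> Omega \<Gamma> D. \<omega> t = a} \<in> gens \<Gamma> D"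
  proof -
    have vv: "valid \<Gamma> D (t # ts) (a # as')" using Cons.prems as by simp
    have tD: "t \<in> D" using vv by (simp add: valid_def)
    have "(a # as') ! 0 \<in> \<Gamma> ((t # ts) ! 0)" using vv unfolding valid_def by blast
    then have aG: "a \<in> \<Gamma> t" by simp
    show ?thesis unfolding gens_def using tD aG by blast
  qed
  interpret sa: sigma_algebra "Omega \<Gamma> D" "Sigma_D \<Gamma> D"
    unfolding Sigma_D_def by (rule sigma_algebra_sigma_sets) (auto simp: Omega_def)
  have "{\<omega> \<in> Omega \<Gamma> D. \<omega> t = a} \<in> Sigma_D \<Gamma> D" using g gens_sub_Sigma by blast
  then show ?case unfolding as cyl_Cons using Cons.IH[OF v] by (rule sa.Int)
qed


lemma sigma_cylset: "sigma_sets (Omega \<Gamma> D) (cylset \<Gamma> D) = Sigma_D \<Gamma> D"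
proof
  show "sigma_sets (Omega \<Gamma> D) (cylset \<Gamma> D) \<subseteq> Sigma_D \<Gamma> D"
    unfolding Sigma_D_def
    by (rule sigma_sets_mono) (use cyl_in in \<open>auto simp: cylset_def Sigma_D_def\<close>)
  have "gens \<Gamma> D \<subseteq> cylset \<Gamma> D"
  proof
    fix X assume "X \<in> gens \<Gamma> D"
    then obtain t a where X: "X = {\<omega> \<in> Omega \<Gamma> D. \<omega> t = a}" "t \<in> D" "a \<in> \<Gamma> t"
      unfolding gens_def by blast
    have "X = cyl \<Gamma> D [t] [a]" using X(1) by (simp add: cyl_Cons cyl_Nil) (auto simp: Omega_def)
    moreover have "valid \<Gamma> D [t] [a]" using X by (simp add: valid_def)
    ultimately show "X \<in> cylset \<Gamma> D" unfolding cylset_def by blast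
  qed
  then show "Sigma_D \<Gamma> D \<subseteq> sigma_sets (Omega \<Gamma> D) (cylset \<Gamma> D)"
    unfolding Sigma_D_def gens_def[symmetric] by (rule sigma_sets_mono')
qed


lemma Int_stable_cylset: "Int_stable (cylset \<Gamma> D)"
proof (rule Int_stableI)
  fix X Y assume "X \<in> cylset \<Gamma> D" "Y \<in> cylset \<Gamma> D"
  then obtain ts as ts' as' where X: "X = cyl \<Gamma> D ts as" "valid \<Gamma> D ts as"
    and Y: "Y = cyl \<Gamma> D ts' as'" "valid \<Gamma> D ts' as'" unfolding cylset_def by blast
  have "X \<inter> Y = cyl \<Gamma> D (ts @ ts') (as @ as')" using X Y by (simp add: cyl_append valid_def)
  moreover have "valid \<Gamma> D (ts @ ts') (as @ as')"
    using X(2) Y(2) unfolding valid_def by (auto simp: nth_append)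
  ultimately show "X \<inter> Y \<in> cylset \<Gamma> D" unfolding cylset_def by blast
qed


lemma Pphi_unique:
  fixes p :: "'s \<Rightarrow> 'a \<Rightarrow> ('h::complex_inner \<Rightarrow> 'h)"
  assumes M: "prob_space M" "space M = Omega \<Gamma> D" "sets M = Sigma_D \<Gamma> D"
    and cyl: "\<And>ts as. valid \<Gamma> D ts as \<Longrightarrow> measure M (cyl \<Gamma> D ts as) = (norm (pjoint p ts as (unitvec \<phi>)))\<^sup>2"
  shows "Pphi p \<Gamma> D \<phi> = M"
  unfolding Pphi_def
proof (rule the_equality)
  show "prob_space M \<and> space M = Omega \<Gamma> D \<and> sets M = Sigma_D \<Gamma> D \<and>
     (\<forall>ts as. length ts = length as \<and> set ts \<subseteq> D \<and> (\<forall>i < length ts. as ! i \<in> \<Gamma> (ts ! i))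
        \<longrightarrow> measure M (cyl \<Gamma> D ts as) = (norm (pjoint p ts as (unitvec \<phi>)))\<^sup>2)"
    using M cyl unfolding valid_def by blast
  fix N assume N: "prob_space N \<and> space N = Omega \<Gamma> D \<and> sets N = Sigma_D \<Gamma> D \<and>
     (\<forall>ts as. length ts = length as \<and> set ts \<subseteq> D \<and> (\<forall>i < length ts. as ! i \<in> \<Gamma> (ts ! i))
        \<longrightarrow> measure N (cyl \<Gamma> D ts as) = (norm (pjoint p ts as (unitvec \<phi>)))\<^sup>2)"
  interpret M: prob_space M by (rule M(1))
  interpret N: prob_space N using N by blast
  show "N = M"
  proof (rule measure_eqI_generator_eq[OF Int_stable_cylset, where \<Omega> = "Omega \<Gamma> D" and A = "\<lambda>_. Omega \<Gamma> D"])
    show "cylset \<Gamma> D \<subseteq> Pow (Omega \<Gamma> D)" unfolding cylset_def using cyl_sub by blast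
    fix X assume "X \<in> cylset \<Gamma> D"
    then obtain ts as where X: "X = cyl \<Gamma> D ts as" "valid \<Gamma> D ts as" unfolding cylset_def by blast
    have "measure N X = measure M X" using N cyl X unfolding valid_def by auto
    then show "emeasure N X = emeasure M X" by (simp add: M.emeasure_eq_measure N.emeasure_eq_measure)
  next
    show "sets N = sigma_sets (Omega \<Gamma> D) (cylset \<Gamma> D)" using N by (simp add: sigma_cylset)
    show "sets M = sigma_sets (Omega \<Gamma> D) (cylset \<Gamma> D)" using M by (simp add: sigma_cylset)
    have "Omega \<Gamma> D \<in> cylset \<Gamma> D" unfolding cylset_def
      using cyl_Nil[of \<Gamma> D] by (force simp: valid_def)
    then show "range (\<lambda>_. Omega \<Gamma> D) \<subseteq> cylset \<Gamma> D" by auto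
    show "\<Union> (range (\<lambda>_. Omega \<Gamma> D)) = Omega \<Gamma> D" by simp
    show "emeasure N (Omega \<Gamma> D) \<noteq> \<infinity>" for i by simp
  qed
qed


context qsetup begin

definition dec :: "('s \<Rightarrow> nd) \<Rightarrow> ('s \<Rightarrow> 'a)" where
  "dec x = (\<lambda>t\<in>S. from_nat_into (\<Gamma> t) (of_discrete (x t)))"

definition MS :: "('s \<Rightarrow> 'a) measure" where
  "MS = distr lim (Msp \<Gamma> S) dec"

lemma dec_in: "dec x \<in> Omega \<Gamma> S"
  unfolding dec_def Omega_def using ne by (auto intro: from_nat_into)

lemma comp_meas:
  assumes "t \<in> S"
  shows "{x \<in> space lim. g (x t)} \<in> sets lim"
proof -
  have m: "(\<lambda>x. x t) \<in> PiM S (\<lambda>_. borel :: nd measure) \<rightarrow>\<^sub>M borel"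
    using measurable_component_singleton[OF assms] .
  have "(\<lambda>x. x t) -` {n. g n} \<inter> space (PiM S (\<lambda>_. borel :: nd measure)) \<in> sets (PiM S (\<lambda>_. borel :: nd measure))"
    by (rule measurable_sets[OF m]) (simp add: sets_borel_eq_count_space)
  moreover have "space lim = space (PiM S (\<lambda>_. borel :: nd measure))" by (simp add: space_lim space_PiM)
  ultimately show ?thesis by (simp add: sets_lim vimage_def Int_def conj_commute)
qed

lemma dec_meas: "dec \<in> lim \<rightarrow>\<^sub>M Msp \<Gamma> S"
  unfolding Msp_def
proof (rule measurable_measure_of[OF gens_Pow])
  show "dec \<in> space lim \<rightarrow> Omega \<Gamma> S" using dec_in by blast
  fix Y assume "Y \<in> gens \<Gamma> S"
  then obtain t a where Y: "Y = {\<omega> \<in> Omega \<Gamma> S. \<omega> t = a}" "t \<in> S" unfolding gens_def by blast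
  have "dec -` Y \<inter> space lim = {x \<in> space lim. from_nat_into (\<Gamma> t) (of_discrete (x t)) = a}"
    using Y dec_in by (auto simp: dec_def)
  also have "\<dots> \<in> sets lim" by (rule comp_meas[OF Y(2)])
  finally show "dec -` Y \<inter> space lim \<in> sets lim" .
qed

lemma prob_MS: "prob_space MS"
  unfolding MS_def by (rule prob_space.prob_space_distr[OF prob_lim dec_meas])

lemma space_MS: "space MS = Omega \<Gamma> S"
  by (simp add: MS_def)

lemma sets_MS: "sets MS = Sigma_D \<Gamma> S"
  by (simp add: MS_def)

lemma pjoint_eq:
  assumes "valid \<Gamma> S ts as"
  shows "pjoint p ts as u = op_prod (map (\<lambda>(t, a). p t a) (zip ts as)) u"
  unfolding pjoint_def
proof (rule meet_apply[OF ucomm _ pfam_proj])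
  show "set (map (\<lambda>(t, a). p t a) (zip ts as)) \<subseteq> pfam p \<Gamma> S"
  proof
    fix f assume "f \<in> set (map (\<lambda>(t, a). p t a) (zip ts as))"
    then obtain i where i: "i < length ts" "f = p (ts ! i) (as ! i)"
      using assms by (auto simp: valid_def in_set_zip)
    then show "f \<in> pfam p \<Gamma> S" using assms by (auto simp: valid_def intro!: pfamI)
  qed
qed

lemma cyl_MS:
  assumes v: "valid \<Gamma> S ts as"
  shows "measure MS (cyl \<Gamma> S ts as) = (norm (pjoint p ts as u))\<^sup>2"
proof -
  define J where "J = set ts"
  define n where "n = length ts"
  have lens: "length as = n" using v by (simp add: valid_def n_def)
  have JS: "J \<subseteq> S" using v by (simp add: valid_def J_def)
  have fJ: "finite J" by (simp add: J_def)
  have tsJ: "ts ! i \<in> J" if "i < n" for i using that by (simp add: J_def n_def)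
  have asG: "as ! i \<in> \<Gamma> (ts ! i)" if "i < n" for i using v that by (simp add: valid_def n_def)
  define X where "X = {y \<in> PiE J (\<lambda>_. UNIV :: nd set). \<forall>i < n. from_nat_into (\<Gamma> (ts ! i)) (of_discrete (y (ts ! i))) = as ! i}"
  have Xs: "X \<in> sets (PiM J (\<lambda>_. borel :: nd measure))" using sets_PiM_disc[OF fJ] by (auto simp: X_def)
  have "measure MS (cyl \<Gamma> S ts as) = measure lim (dec -` cyl \<Gamma> S ts as \<inter> space lim)"
    unfolding MS_def by (rule measure_distr[OF dec_meas]) (use cyl_in[OF v] in simp)
  also have "dec -` cyl \<Gamma> S ts as \<inter> space lim = prod_emb S (\<lambda>_. borel) J X"
    using dec_in tsJ JS by (auto simp: cyl_def prod_emb_def X_def space_lim dec_def n_def PiE_iff subset_iff)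
  also have "measure lim \<dots> = measure (PJ J) X" by (rule measure_lim[OF JS fJ Xs])
  also have "\<dots> = measure (Q J) (enc J -` X \<inter> space (Q J))"
    unfolding PJ_def by (rule measure_distr[OF enc_meas Xs])
  also have "enc J -` X \<inter> space (Q J) = {\<omega> \<in> PiE J \<Gamma>. \<forall>i < n. \<omega> (ts ! i) = as ! i}"
  proof -
    have "from_nat_into (\<Gamma> (ts ! i)) (of_discrete (enc J \<omega> (ts ! i))) = \<omega> (ts ! i)"
      if "\<omega> \<in> PiE J \<Gamma>" "i < n" for \<omega> i
    proof -
      have "\<omega> (ts ! i) \<in> \<Gamma> (ts ! i)" using that tsJ by (auto simp: PiE_iff)
      moreover have "countable (\<Gamma> (ts ! i))" using countable tsJ that JS by blast
      ultimately show ?thesis using tsJ[OF that(2)]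
        by (simp add: enc_def discrete.discrete_inverse from_nat_into_to_nat_on)
    qed
    then show ?thesis by (auto simp: X_def enc_in)
  qed
  finally have m: "measure MS (cyl \<Gamma> S ts as) = measure (Q J) {\<omega> \<in> PiE J \<Gamma>. \<forall>i < n. \<omega> (ts ! i) = as ! i}" .
  let ?L = "map (\<lambda>(t, a). p t a) (zip ts as)"
  show ?thesis
  proof (cases "\<forall>i < n. \<forall>j < n. ts ! i = ts ! j \<longrightarrow> as ! i = as ! j")
    case True
    define idx where "idx t = (SOME i. i < n \<and> ts ! i = t)" for t
    have idx: "idx t < n \<and> ts ! (idx t) = t" if "t \<in> J" for t
    proof -
      have "\<exists>i. i < n \<and> ts ! i = t" using that by (auto simp: J_def n_def in_set_conv_nth)
      then show ?thesis unfolding idx_def by (rule someI_ex)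
    qed
    define \<omega>0 where "\<omega>0 = (\<lambda>t\<in>J. as ! idx t)"
    have w0: "\<omega>0 (ts ! i) = as ! i" if "i < n" for i
    proof -
      have a: "idx (ts ! i) < n" and b: "ts ! idx (ts ! i) = ts ! i" using idx[OF tsJ[OF that]] by auto
      have "as ! idx (ts ! i) = as ! i" using True a that b by blast
      then show ?thesis using tsJ[OF that] by (simp add: \<omega>0_def)
    qed
    have w0in: "\<omega>0 \<in> PiE J \<Gamma>"
    proof -
      have "\<omega>0 t \<in> \<Gamma> t" if "t \<in> J" for t
      proof -
        have "as ! idx t \<in> \<Gamma> (ts ! idx t)" using idx[OF that] asG by blast
        then show ?thesis using idx[OF that] that by (simp add: \<omega>0_def)
      qed
      then show ?thesis by (auto simp: \<omega>0_def PiE_iff)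
    qed
    have C: "{\<omega> \<in> PiE J \<Gamma>. \<forall>i < n. \<omega> (ts ! i) = as ! i} = {\<omega>0}"
    proof (rule set_eqI, rule iffI)
      fix \<omega> assume "\<omega> \<in> {\<omega> \<in> PiE J \<Gamma>. \<forall>i < n. \<omega> (ts ! i) = as ! i}"
      then have h: "\<omega> \<in> PiE J \<Gamma>" "\<And>i. i < n \<Longrightarrow> \<omega> (ts ! i) = as ! i" by auto
      have "\<omega> t = \<omega>0 t" for t
      proof (cases "t \<in> J")
        case True
        then show ?thesis using idx[OF True] h(2) w0 by metis
      next
        case False
        then show ?thesis using h(1) w0in by (auto simp: PiE_iff extensional_def)
      qed
      then show "\<omega> \<in> {\<omega>0}" by auto
    next
      fix \<omega> assume "\<omega> \<in> {\<omega>0}"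
      then show "\<omega> \<in> {\<omega> \<in> PiE J \<Gamma>. \<forall>i < n. \<omega> (ts ! i) = as ! i}" using w0in w0 by auto
    qed
    have "measure (Q J) {\<omega>0} = enn2real (W J \<omega>0)"
      using w0in by (simp add: measure_def emeasure_Q nn_integral_count_space_finite)
    also have "\<dots> = (norm (FF J \<omega>0))\<^sup>2" by (simp add: W_def)
    also have "FF J \<omega>0 = op_prod (map (\<lambda>t. p t (\<omega>0 t)) ts) u"
      by (rule FF_list[symmetric]) (use fJ JS w0in in \<open>auto simp: J_def PiE_iff\<close>)
    also have "map (\<lambda>t. p t (\<omega>0 t)) ts = ?L"
      by (rule nth_equalityI) (use lens w0 in \<open>simp_all add: n_def\<close>)
    also have "op_prod ?L u = pjoint p ts as u" by (rule pjoint_eq[OF v, symmetric])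
    finally show ?thesis using m C by simp
  next
    case False
    then obtain i j where ij: "i < n" "j < n" "ts ! i = ts ! j" "as ! i \<noteq> as ! j" by blast
    have C: "{\<omega> \<in> PiE J \<Gamma>. \<forall>i < n. \<omega> (ts ! i) = as ! i} = {}"
    proof -
      have "\<not> (\<forall>k < n. x (ts ! k) = as ! k)" for x
      proof
        assume h: "\<forall>k < n. x (ts ! k) = as ! k"
        have e1: "x (ts ! i) = as ! i" using h ij(1) by blast
        have e2: "x (ts ! j) = as ! j" using h ij(2) by blast
        show False using e1 e2 ij(3,4) by simp
      qed
      then show ?thesis by blast
    qed
    let ?t = "ts ! i"
    have tS: "?t \<in> S" using tsJ[OF ij(1)] JS by auto
    define f where "f = p ?t (as ! i)"
    define g where "g = p ?t (as ! j)"
    have fL: "f \<in> set ?L"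
    proof -
      have "?L ! i = f" using ij(1) lens by (simp add: f_def n_def)
      moreover have "i < length ?L" using ij(1) lens by (simp add: n_def)
      ultimately show ?thesis using nth_mem[of i ?L] by simp
    qed
    have gL: "g \<in> set ?L"
    proof -
      have "?L ! j = g" using ij(2,3) lens by (simp add: g_def n_def)
      moreover have "j < length ?L" using ij(2) lens by (simp add: n_def)
      ultimately show ?thesis using nth_mem[of j ?L] by simp
    qed
    have Lsub: "set ?L \<subseteq> pfam p \<Gamma> S"
    proof
      fix h assume "h \<in> set ?L"
      then obtain k where k: "k < length ts" "h = p (ts ! k) (as ! k)"
        using lens by (auto simp: in_set_zip n_def)
      then show "h \<in> pfam p \<Gamma> S" using v by (auto simp: valid_def intro!: pfamI)
    qed
    have asi: "as ! i \<in> \<Gamma> ?t" using asG[OF ij(1)] .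
    have asj: "as ! j \<in> \<Gamma> ?t" using asG[OF ij(2)] ij(3) by simp
    have orth: "f (g x) = 0" for x unfolding f_def g_def
      by (rule res_orth[where G = "\<Gamma> ?t"]) (use proj tS resolution asi asj ij(4) in auto)
    have "op_prod ?L u = f (op_prod (remove1 f ?L) u)" by (rule comm_front[OF ucomm Lsub fL])
    also have "\<dots> = 0"
    proof (cases "f = g")
      case True
      have "f \<circ> f = f" using pfam_idem fL Lsub by blast
      then have "f (op_prod (remove1 f ?L) u) = f (f (op_prod (remove1 f ?L) u))" by (simp add: fun_eq_iff)
      also have "\<dots> = 0" using orth True by simp
      finally show ?thesis .
    next
      case False
      have gR: "g \<in> set (remove1 f ?L)" using gL False by (simp add: in_set_remove1)
      have "set (remove1 f ?L) \<subseteq> pfam p \<Gamma> S" by (rule order_trans[OF set_remove1_subset Lsub])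
      then have "op_prod (remove1 f ?L) u = g (op_prod (remove1 g (remove1 f ?L)) u)"
        by (rule comm_front[OF ucomm _ gR])
      then show ?thesis using orth by simp
    qed
    finally have "pjoint p ts as u = 0" using pjoint_eq[OF v] by simp
    then show ?thesis using m C by simp
  qed
qed

end


lemma sup_event:
  assumes countable: "\<And>t. t \<in> S \<Longrightarrow> countable (\<Gamma> t)"
    and ne: "\<And>t. t \<in> S \<Longrightarrow> \<Gamma> t \<noteq> {}"
    and DS: "D \<subseteq> S" and A: "A \<in> Sigma_sup \<Gamma> S D"
  shows "restr_event \<Gamma> D A \<in> Sigma_D \<Gamma> D"
    and "(\<lambda>\<omega>. restrict \<omega> D) -` restr_event \<Gamma> D A \<inter> Omega \<Gamma> S = A"
proof -
  let ?X = "\<lambda>\<omega>. restrict \<omega> D"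
  let ?G = "{{\<omega> \<in> Omega \<Gamma> D. \<omega> t \<in> B} | t B. t \<in> D \<and> B \<subseteq> \<Gamma> t}"
  have Xf: "?X \<in> Omega \<Gamma> S \<rightarrow> Omega \<Gamma> D" using DS by (auto simp: Omega_def PiE_iff)
  have sG: "sigma_sets (Omega \<Gamma> D) ?G = Sigma_D \<Gamma> D"
  proof
    show "sigma_sets (Omega \<Gamma> D) ?G \<subseteq> Sigma_D \<Gamma> D"
      unfolding Sigma_D_def
    proof (rule sigma_sets_mono, rule subsetI)
      fix Y assume "Y \<in> ?G"
      then obtain t B where Y: "Y = {\<omega> \<in> Omega \<Gamma> D. \<omega> t \<in> B}" "t \<in> D" "B \<subseteq> \<Gamma> t" by blast
      have "Y = \<Union> ((\<lambda>a. {\<omega> \<in> Omega \<Gamma> D. \<omega> t = a}) ` B)" using Y(1) by auto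
      also have "\<dots> \<in> sigma_sets (Omega \<Gamma> D) {{\<omega> \<in> Omega \<Gamma> D. \<omega> t = a} |t a. t \<in> D \<and> a \<in> \<Gamma> t}"
      proof (rule sigma_sets_UNION)
        show "countable ((\<lambda>a. {\<omega> \<in> Omega \<Gamma> D. \<omega> t = a}) ` B)"
          using countable Y DS countable_subset by blast
        show "b \<in> sigma_sets (Omega \<Gamma> D) {{\<omega> \<in> Omega \<Gamma> D. \<omega> t = a} |t a. t \<in> D \<and> a \<in> \<Gamma> t}"
          if "b \<in> (\<lambda>a. {\<omega> \<in> Omega \<Gamma> D. \<omega> t = a}) ` B" for b
          using that Y by (auto intro!: sigma_sets.Basic)
      qed
      finally show "Y \<in> sigma_sets (Omega \<Gamma> D) {{\<omega> \<in> Omega \<Gamma> D. \<omega> t = a} |t a. t \<in> D \<and> a \<in> \<Gamma> t}" .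
    qed
    show "Sigma_D \<Gamma> D \<subseteq> sigma_sets (Omega \<Gamma> D) ?G"
      unfolding Sigma_D_def
    proof (rule sigma_sets_mono', rule subsetI)
      fix Y assume "Y \<in> {{\<omega> \<in> Omega \<Gamma> D. \<omega> t = a} |t a. t \<in> D \<and> a \<in> \<Gamma> t}"
      then obtain t a where Y: "Y = {\<omega> \<in> Omega \<Gamma> D. \<omega> t = a}" "t \<in> D" "a \<in> \<Gamma> t" by blast
      have "Y = {\<omega> \<in> Omega \<Gamma> D. \<omega> t \<in> {a}}" using Y by simp
      then show "Y \<in> ?G" using Y by blast
    qed
  qed
  have vG: "{?X -` B \<inter> Omega \<Gamma> S | B. B \<in> ?G} =
      {{\<omega> \<in> Omega \<Gamma> S. \<omega> t \<in> B} | t B. t \<in> D \<and> B \<subseteq> \<Gamma> t}"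
  proof -
    have e: "?X -` {\<omega> \<in> Omega \<Gamma> D. \<omega> t \<in> B} \<inter> Omega \<Gamma> S = {\<omega> \<in> Omega \<Gamma> S. \<omega> t \<in> B}"
      if "t \<in> D" for t B using that Xf by auto
    show ?thesis
    proof (rule set_eqI, rule iffI)
      fix Z assume "Z \<in> {?X -` B \<inter> Omega \<Gamma> S | B. B \<in> ?G}"
      then obtain t B where "Z = ?X -` {\<omega> \<in> Omega \<Gamma> D. \<omega> t \<in> B} \<inter> Omega \<Gamma> S" "t \<in> D" "B \<subseteq> \<Gamma> t"
        by blast
      then show "Z \<in> {{\<omega> \<in> Omega \<Gamma> S. \<omega> t \<in> B} | t B. t \<in> D \<and> B \<subseteq> \<Gamma> t}" using e by blast
    next
      fix Z assume "Z \<in> {{\<omega> \<in> Omega \<Gamma> S. \<omega> t \<in> B} | t B. t \<in> D \<and> B \<subseteq> \<Gamma> t}"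
      then obtain t B where Z: "Z = {\<omega> \<in> Omega \<Gamma> S. \<omega> t \<in> B}" "t \<in> D" "B \<subseteq> \<Gamma> t" by blast
      then have "Z = ?X -` {\<omega> \<in> Omega \<Gamma> D. \<omega> t \<in> B} \<inter> Omega \<Gamma> S" using e by blast
      moreover have "{\<omega> \<in> Omega \<Gamma> D. \<omega> t \<in> B} \<in> ?G" using Z by blast
      ultimately show "Z \<in> {?X -` B \<inter> Omega \<Gamma> S | B. B \<in> ?G}" by blast
    qed
  qed
  have "Sigma_sup \<Gamma> S D = {?X -` B \<inter> Omega \<Gamma> S | B. B \<in> sigma_sets (Omega \<Gamma> D) ?G}"
    unfolding Sigma_sup_def vG[symmetric] by (rule sigma_sets_vimage_commute[OF Xf, symmetric])
  then obtain B where B: "B \<in> Sigma_D \<Gamma> D" "A = ?X -` B \<inter> Omega \<Gamma> S" using A sG by auto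
  have BO: "B \<subseteq> Omega \<Gamma> D"
    using B(1) unfolding Sigma_D_def by (rule sigma_sets_into_sp[rotated]) auto
  have RB: "restr_event \<Gamma> D A = B"
  proof (rule set_eqI, rule iffI)
    fix \<omega> assume "\<omega> \<in> restr_event \<Gamma> D A"
    then obtain \<omega>' where w: "\<omega> \<in> Omega \<Gamma> D" "\<omega>' \<in> A" "\<forall>t\<in>D. \<omega> t = \<omega>' t"
      unfolding restr_event_def by blast
    have "?X \<omega>' = \<omega>" using w(1,3) by (auto simp: Omega_def PiE_iff extensional_def fun_eq_iff)
    moreover have "?X \<omega>' \<in> B" using w(2) B(2) by blast
    ultimately show "\<omega> \<in> B" by simp
  next
    fix \<omega> assume wB: "\<omega> \<in> B"
    then have wO: "\<omega> \<in> Omega \<Gamma> D" using BO by blast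
    define \<omega>' where "\<omega>' = (\<lambda>t\<in>S. if t \<in> D then \<omega> t else (SOME a. a \<in> \<Gamma> t))"
    have w'O: "\<omega>' \<in> Omega \<Gamma> S"
      using wO DS ne by (auto simp: \<omega>'_def Omega_def PiE_iff some_in_eq)
    have "?X \<omega>' = \<omega>" using wO DS by (auto simp: \<omega>'_def Omega_def PiE_iff extensional_def fun_eq_iff)
    then have "\<omega>' \<in> A" using B(2) w'O wB by simp
    moreover have "\<forall>t\<in>D. \<omega> t = \<omega>' t" using DS by (auto simp: \<omega>'_def)
    ultimately show "\<omega> \<in> restr_event \<Gamma> D A" using wO unfolding restr_event_def by blast
  qed
  show "restr_event \<Gamma> D A \<in> Sigma_D \<Gamma> D" using RB B(1) by simp
  show "?X -` restr_event \<Gamma> D A \<inter> Omega \<Gamma> S = A" using RB B(2) by simp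
qed


lemma key:
  fixes S D :: "'s set" and \<Gamma> :: "'s \<Rightarrow> 'a set"
    and p :: "'s \<Rightarrow> 'a \<Rightarrow> ('h::chilbert_space \<Rightarrow> 'h)"
    and A :: "('s \<Rightarrow> 'a) set"
  assumes countable: "\<And>t. t \<in> S \<Longrightarrow> countable (\<Gamma> t)"
    and proj: "\<And>t a. t \<in> S \<Longrightarrow> a \<in> \<Gamma> t \<Longrightarrow> is_projection (p t a)"
    and resolution: "\<And>t \<phi>. t \<in> S \<Longrightarrow> ((\<lambda>a. p t a \<phi>) has_sum \<phi>) (\<Gamma> t)"
    and DS: "D \<subseteq> S"
    and A: "A \<in> Sigma_sup \<Gamma> S D"
    and ne: "\<And>t. t \<in> S \<Longrightarrow> \<Gamma> t \<noteq> {}"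
    and \<phi>: "commutes_on (pfam p \<Gamma> S) \<phi>" "\<phi> \<noteq> 0"
  shows "measure (Pphi p \<Gamma> S \<phi>) A = measure (Pphi p \<Gamma> D \<phi>) (restr_event \<Gamma> D A)"
proof -
  define u where "u = unitvec \<phi>"
  have pf: "\<And>f. f \<in> pfam p \<Gamma> S \<Longrightarrow> is_projection f" unfolding pfam_def using proj by blast
  have uc: "commutes_on (pfam p \<Gamma> S) u" unfolding u_def unitvec_def
    by (rule commutes_scaleC[OF \<phi>(1) pf])
  have un: "norm u = 1" unfolding u_def unitvec_def using \<phi>(2) by (simp add: norm_scaleC norm_divide)
  interpret Q: qsetup S \<Gamma> p u
    by (unfold_locales) (use countable proj resolution ne uc un in auto)
  have PS: "Pphi p \<Gamma> S \<phi> = Q.MS"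
  proof (rule Pphi_unique[OF Q.prob_MS Q.space_MS Q.sets_MS])
    fix ts as assume "valid \<Gamma> S ts as"
    then have "measure Q.MS (cyl \<Gamma> S ts as) = (norm (pjoint p ts as u))\<^sup>2" by (rule Q.cyl_MS)
    then show "measure Q.MS (cyl \<Gamma> S ts as) = (norm (pjoint p ts as (unitvec \<phi>)))\<^sup>2"
      by (simp only: u_def)
  qed
  let ?X = "\<lambda>\<omega>. restrict \<omega> D"
  define MD where "MD = distr Q.MS (Msp \<Gamma> D) ?X"
  have Xm: "?X \<in> Q.MS \<rightarrow>\<^sub>M Msp \<Gamma> D"
    unfolding Msp_def
  proof (rule measurable_measure_of[OF gens_Pow])
    show "?X \<in> space Q.MS \<rightarrow> Omega \<Gamma> D" using DS by (auto simp: Q.space_MS Omega_def PiE_iff)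
    fix Y assume "Y \<in> gens \<Gamma> D"
    then obtain t a where Y: "Y = {\<omega> \<in> Omega \<Gamma> D. \<omega> t = a}" "t \<in> D" "a \<in> \<Gamma> t"
      unfolding gens_def by blast
    have "?X -` Y \<inter> space Q.MS = {\<omega> \<in> Omega \<Gamma> S. \<omega> t = a}"
      using Y DS by (auto simp: Q.space_MS Omega_def PiE_iff extensional_def)
    also have "\<dots> \<in> gens \<Gamma> S" using Y DS unfolding gens_def by blast
    also have "gens \<Gamma> S \<subseteq> sets Q.MS" using gens_sub_Sigma Q.sets_MS by blast
    finally show "?X -` Y \<inter> space Q.MS \<in> sets Q.MS" .
  qed
  have PD: "Pphi p \<Gamma> D \<phi> = MD"
  proof (rule Pphi_unique)
    show "prob_space MD" unfolding MD_def by (rule prob_space.prob_space_distr[OF Q.prob_MS Xm])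
    show "space MD = Omega \<Gamma> D" by (simp add: MD_def)
    show "sets MD = Sigma_D \<Gamma> D" by (simp add: MD_def)
    fix ts as assume v: "valid \<Gamma> D ts as"
    have vS: "valid \<Gamma> S ts as" using v DS by (auto simp: valid_def)
    have "measure MD (cyl \<Gamma> D ts as) = measure Q.MS (?X -` cyl \<Gamma> D ts as \<inter> space Q.MS)"
      unfolding MD_def by (rule measure_distr[OF Xm]) (simp add: cyl_in[OF v])
    also have "?X -` cyl \<Gamma> D ts as \<inter> space Q.MS = cyl \<Gamma> S ts as"
      using v DS by (auto simp: Q.space_MS cyl_def valid_def Omega_def PiE_iff subset_iff extensional_def)
    also have "measure Q.MS \<dots> = (norm (pjoint p ts as u))\<^sup>2" by (rule Q.cyl_MS[OF vS])
    finally show "measure MD (cyl \<Gamma> D ts as) = (norm (pjoint p ts as (unitvec \<phi>)))\<^sup>2"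
      by (simp add: u_def)
  qed
  note se = sup_event[OF countable ne DS A]
  have "measure MD (restr_event \<Gamma> D A) = measure Q.MS (?X -` restr_event \<Gamma> D A \<inter> space Q.MS)"
    unfolding MD_def by (rule measure_distr[OF Xm]) (simp add: se(1))
  also have "?X -` restr_event \<Gamma> D A \<inter> space Q.MS = A" using se(2) by (simp add: Q.space_MS)
  finally show ?thesis using PS PD by simp
qed

theorem lemma8:
  fixes S D :: "'s set" and \<Gamma> :: "'s \<Rightarrow> 'a set"
    and p :: "'s \<Rightarrow> 'a \<Rightarrow> ('h::chilbert_space \<Rightarrow> 'h)"
    and A :: "('s \<Rightarrow> 'a) set"
  assumes countable: "\<And>t. t \<in> S \<Longrightarrow> countable (\<Gamma> t)"
    and proj: "\<And>t a. t \<in> S \<Longrightarrow> a \<in> \<Gamma> t \<Longrightarrow> is_projection (p t a)"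
    and resolution: "\<And>t \<phi>. t \<in> S \<Longrightarrow> ((\<lambda>a. p t a \<phi>) has_sum \<phi>) (\<Gamma> t)"
    and DS: "D \<subseteq> S"
    and A: "A \<in> Sigma_sup \<Gamma> S D"
  shows "Hev p \<Gamma> S A = Hev p \<Gamma> D (restr_event \<Gamma> D A) \<inter> Hcomm (pfam p \<Gamma> S)"
proof -
  have pfD: "pfam p \<Gamma> D \<subseteq> pfam p \<Gamma> S" using DS unfolding pfam_def by blast
  have HSD: "\<phi> \<in> Hcomm (pfam p \<Gamma> D)" if "\<phi> \<in> Hcomm (pfam p \<Gamma> S)" for \<phi>
    using that commutes_mono[OF _ pfD] by (simp add: Hcomm_def)
  show ?thesis
  proof (cases "\<forall>t\<in>S. \<Gamma> t \<noteq> {}")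
    case True
    have eq: "measure (Pphi p \<Gamma> S \<phi>) A = measure (Pphi p \<Gamma> D \<phi>) (restr_event \<Gamma> D A)"
      if "\<phi> \<in> Hcomm (pfam p \<Gamma> S)" "\<phi> \<noteq> 0" for \<phi>
      by (rule key[OF countable proj resolution DS A]) (use True that in \<open>auto simp: Hcomm_def\<close>)
    show ?thesis
    proof (rule set_eqI)
      fix \<phi>
      show "\<phi> \<in> Hev p \<Gamma> S A \<longleftrightarrow> \<phi> \<in> Hev p \<Gamma> D (restr_event \<Gamma> D A) \<inter> Hcomm (pfam p \<Gamma> S)"
      proof (cases "\<phi> = 0")
        case True then show ?thesis using HSD unfolding Hev_def by auto
      next
        case False then show ?thesis using eq[of \<phi>] HSD unfolding Hev_def by auto
      qed
    qed
  next
    case False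
    then obtain t where t: "t \<in> S" "\<Gamma> t = {}" by blast
    have zero: "x = 0" for x :: 'h
      by (rule res_empty[where q = "p t"]) (use resolution[OF t(1)] t(2) in simp)
    show ?thesis
      unfolding Hev_def using HSD zero by auto
  qed
qed


end
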